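(* Let $p=p(n)$ be a sequence of probability values and let $\Gamma\in G(n,p)$. Suppose that (i) for some sequence $\omega(n)\to\infty$, $p>\frac{\log(n)+\log(\log(n))+\omega(n)}{n}$, and (ii) either $n(1-p)\to 0$ or $n(1-p)\to\infty$. Then a.a.s. $\Gamma$ has no star-cut-vertices. Further, if only hypothesis (i) holds, then a.a.s. for every star-cut-vertex $a$ of $\Gamma$, at most one connected component of the full subgraph $\Gamma\setminus\mathrm{st}(a)$ has more than one vertex.
   Context: $G(n,p)$ is the Erdős–Rényi random graph on $n$ vertices, each edge present independently with probability $p=p(n)$; a.a.s. means with probability tending to $1$ as $n\to\infty$; $\log$ is the natural logarithm. For a vertex $a$, $\mathrm{st}(a)$ is $a$ together with all vertices adjacent to $a$. A vertex $a$ is a star-cut-vertex of $\Gamma$ if the full (induced) subgraph on $V\setminus\mathrm{st}(a)$ is disconnected. *)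

theory Defs
  imports Complex_Main
begin

text \<open>Graphs on the vertex set {0..<n}: a graph is a set E of 2-element subsets
  (edges) of {0..<n}.\<close>

definition all_pairs :: "nat \<Rightarrow> nat set set" where
  "all_pairs n = {{i, j} | i j. i < n \<and> j < n \<and> i \<noteq> j}"

definition gnp_prob :: "nat \<Rightarrow> real \<Rightarrow> (nat set set \<Rightarrow> bool) \<Rightarrow> real" where
  "gnp_prob n p P =
     (\<Sum>E\<in>Pow (all_pairs n).
        (if P E then p ^ card E * (1 - p) ^ (card (all_pairs n) - card E) else 0))"

definition star :: "nat set set \<Rightarrow> nat \<Rightarrow> nat set" where
  "star E a = insert a {b. {a, b} \<in> E}"

definition reach_in :: "nat set set \<Rightarrow> nat set \<Rightarrow> nat \<Rightarrow> nat \<Rightarrow> bool" where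
  "reach_in E S = (\<lambda>x y. x \<in> S \<and> y \<in> S \<and> {x, y} \<in> E)\<^sup>*\<^sup>*"

definition connected_in :: "nat set set \<Rightarrow> nat set \<Rightarrow> bool" where
  "connected_in E S \<longleftrightarrow> (\<forall>x\<in>S. \<forall>y\<in>S. reach_in E S x y)"

definition component_in :: "nat set set \<Rightarrow> nat set \<Rightarrow> nat \<Rightarrow> nat set" where
  "component_in E S x = {y \<in> S. reach_in E S x y}"

definition star_cut_vertex :: "nat \<Rightarrow> nat set set \<Rightarrow> nat \<Rightarrow> bool" where
  "star_cut_vertex n E a \<longleftrightarrow> a < n \<and> \<not> connected_in E ({0..<n} - star E a)"

definition at_most_one_big_component :: "nat set set \<Rightarrow> nat set \<Rightarrow> bool" where
  "at_most_one_big_component E S \<longleftrightarrow>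
     (\<forall>x\<in>S. \<forall>y\<in>S. card (component_in E S x) > 1 \<and> card (component_in E S y) > 1
        \<longrightarrow> component_in E S x = component_in E S y)"

end

theory Submission
  imports Defs "HOL-Real_Asymp.Real_Asymp" "HOL-Library.FuncSet"
begin


definition mu :: "real \<Rightarrow> 'a set \<Rightarrow> ('a set \<Rightarrow> bool) \<Rightarrow> real" where
  "mu p S P = (\<Sum>E\<in>Pow S. if P E then p ^ card E * (1 - p) ^ (card S - card E) else 0)"

lemma gnp_mu: "gnp_prob n p P = mu p (all_pairs n) P"
  unfolding gnp_prob_def mu_def by simp

context
  fixes p :: real
  assumes p0: "0 \<le> p" and p1: "p \<le> 1"
begin

lemma mu_term_nonneg: "0 \<le> p ^ a * (1 - p) ^ b"
  using p0 p1 by simp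

lemma mu_nonneg: "0 \<le> mu p S P"
  unfolding mu_def by (rule sum_nonneg) (simp add: mu_term_nonneg)

lemma mu_mono:
  assumes "\<And>E. E \<subseteq> S \<Longrightarrow> P E \<Longrightarrow> Q E"
  shows "mu p S P \<le> mu p S Q"
  unfolding mu_def by (rule sum_mono) (use assms mu_term_nonneg in auto)

lemma mu_cong:
  assumes "\<And>E. E \<subseteq> S \<Longrightarrow> P E = Q E"
  shows "mu p S P = mu p S Q"
  unfolding mu_def by (rule sum.cong) (use assms in auto)

lemma mu_disj_le: "mu p S (\<lambda>E. P E \<or> Q E) \<le> mu p S P + mu p S Q"
  unfolding mu_def sum.distrib[symmetric] by (rule sum_mono) (use mu_term_nonneg in auto)

lemma mu_disj_eq:
  assumes "\<And>E. E \<subseteq> S \<Longrightarrow> \<not> (P E \<and> Q E)"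
  shows "mu p S (\<lambda>E. P E \<or> Q E) = mu p S P + mu p S Q"
  unfolding mu_def sum.distrib[symmetric] by (rule sum.cong) (use assms in auto)

lemma mu_ex_le:
  assumes "finite X"
  shows "mu p S (\<lambda>E. \<exists>x\<in>X. P x E) \<le> (\<Sum>x\<in>X. mu p S (P x))"
  using assms
proof (induction X rule: finite_induct)
  case empty
  then show ?case unfolding mu_def by simp
next
  case (insert x X)
  have "mu p S (\<lambda>E. \<exists>y\<in>insert x X. P y E) = mu p S (\<lambda>E. P x E \<or> (\<exists>y\<in>X. P y E))"
    by (rule mu_cong) auto
  also have "\<dots> \<le> mu p S (P x) + mu p S (\<lambda>E. \<exists>y\<in>X. P y E)" by (rule mu_disj_le)
  also have "\<dots> \<le> mu p S (P x) + (\<Sum>y\<in>X. mu p S (P y))" using insert by simp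
  finally show ?case using insert by simp
qed

lemma mu_ex_le_bound:
  assumes "finite X" "\<And>x. x \<in> X \<Longrightarrow> mu p S (P x) \<le> c"
  shows "mu p S (\<lambda>E. \<exists>x\<in>X. P x E) \<le> real (card X) * c"
proof -
  have "mu p S (\<lambda>E. \<exists>x\<in>X. P x E) \<le> (\<Sum>x\<in>X. mu p S (P x))" by (rule mu_ex_le[OF assms(1)])
  also have "\<dots> \<le> (\<Sum>x\<in>X. c)" by (rule sum_mono) (use assms in auto)
  finally show ?thesis by simp
qed

lemma mu_conj_const: "mu p S (\<lambda>E. D \<and> P E) = (if D then mu p S P else 0)"
  unfolding mu_def by auto

lemma mu_prod:
  assumes fin: "finite A" "finite B" and disj: "A \<inter> B = {}"
  shows "mu p (A \<union> B) (\<lambda>E. P (E \<inter> A) \<and> Q (E \<inter> B)) = mu p A P * mu p B Q"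
proof -
  let ?h = "\<lambda>(X, Y). X \<union> Y"
  have inj: "inj_on ?h (Pow A \<times> Pow B)"
  proof (rule inj_onI, clarify)
    fix X Y X' Y' assume "X \<subseteq> A" "Y \<subseteq> B" "X' \<subseteq> A" "Y' \<subseteq> B" "X \<union> Y = X' \<union> Y'"
    then show "X = X' \<and> Y = Y'" using disj by blast
  qed
  have img: "Pow (A \<union> B) = ?h ` (Pow A \<times> Pow B)"
  proof
    show "Pow (A \<union> B) \<subseteq> ?h ` (Pow A \<times> Pow B)"
    proof
      fix E assume "E \<in> Pow (A \<union> B)"
      then have "E = ?h (E \<inter> A, E \<inter> B)" "(E \<inter> A, E \<inter> B) \<in> Pow A \<times> Pow B" by auto
      then show "E \<in> ?h ` (Pow A \<times> Pow B)" by blast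
    qed
  qed auto
  define g where "g = (\<lambda>E. if P (E \<inter> A) \<and> Q (E \<inter> B) then p ^ card E * (1 - p) ^ (card (A \<union> B) - card E) else 0)"
  have "mu p (A \<union> B) (\<lambda>E. P (E \<inter> A) \<and> Q (E \<inter> B)) = sum g (Pow (A \<union> B))"
    unfolding mu_def g_def by simp
  also have "\<dots> = sum (g \<circ> ?h) (Pow A \<times> Pow B)"
    unfolding img by (rule sum.reindex[OF inj])
  also have "\<dots> = (\<Sum>X\<in>Pow A. \<Sum>Y\<in>Pow B. g (X \<union> Y))"
    by (subst sum.cartesian_product) (simp add: case_prod_unfold)
  also have "\<dots> = (\<Sum>X\<in>Pow A. \<Sum>Y\<in>Pow B.
        (if P X then p ^ card X * (1 - p) ^ (card A - card X) else 0) *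
        (if Q Y then p ^ card Y * (1 - p) ^ (card B - card Y) else 0))"
  proof (intro sum.cong refl)
    fix X Y assume X: "X \<in> Pow A" and Y: "Y \<in> Pow B"
    have fX: "finite X" "finite Y" using X Y fin finite_subset by auto
    have XY: "X \<inter> Y = {}" using X Y disj by auto
    have e1: "(X \<union> Y) \<inter> A = X" "(X \<union> Y) \<inter> B = Y" using X Y disj by auto
    have c1: "card (X \<union> Y) = card X + card Y" using card_Un_disjoint[OF fX XY] .
    have c2: "card (A \<union> B) = card A + card B" using card_Un_disjoint[OF fin disj] .
    have c3: "card X \<le> card A" "card Y \<le> card B" using X Y fin by (auto intro: card_mono)
    have c4: "card (A \<union> B) - card (X \<union> Y) = (card A - card X) + (card B - card Y)"
      using c1 c2 c3 by simp
    show "g (X \<union> Y) = (if P X then p ^ card X * (1 - p) ^ (card A - card X) else 0) *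
        (if Q Y then p ^ card Y * (1 - p) ^ (card B - card Y) else 0)"
      unfolding g_def e1 c4 by (simp add: c1 power_add)
  qed
  also have "\<dots> = mu p A P * mu p B Q"
    unfolding mu_def by (simp add: sum_product)
  finally show ?thesis .
qed

lemma mu_True: "finite S \<Longrightarrow> mu p S (\<lambda>_. True) = 1"
proof (induction S rule: finite_induct)
  case empty
  then show ?case by (simp add: mu_def)
next
  case (insert x S)
  have s1: "mu p {x} (\<lambda>_. True) = 1"
  proof -
    have "Pow {x} = {{}, {x}}" by auto
    then show ?thesis unfolding mu_def by simp
  qed
  have "mu p (insert x S) (\<lambda>_. True) = mu p ({x} \<union> S) (\<lambda>E. (\<lambda>_. True) (E \<inter> {x}) \<and> (\<lambda>_. True) (E \<inter> S))"
    by simp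
  also have "\<dots> = mu p {x} (\<lambda>_. True) * mu p S (\<lambda>_. True)" by (rule mu_prod) (use insert in auto)
  also have "\<dots> = 1" using insert s1 by simp
  finally show ?case .
qed

lemma mu_not: "finite S \<Longrightarrow> mu p S (\<lambda>E. \<not> P E) = 1 - mu p S P"
proof -
  assume fin: "finite S"
  have "1 = mu p S (\<lambda>E. P E \<or> \<not> P E)" using mu_True[OF fin] by simp
  also have "\<dots> = mu p S P + mu p S (\<lambda>E. \<not> P E)" by (rule mu_disj_eq) auto
  finally show ?thesis by simp
qed

lemma mu_restrict:
  assumes "finite S" "A \<subseteq> S"
  shows "mu p S (\<lambda>E. P (E \<inter> A)) = mu p A P"
proof -
  have fin: "finite A" "finite (S - A)" using assms finite_subset by auto
  have S: "S = A \<union> (S - A)" using assms by auto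
  have "mu p S (\<lambda>E. P (E \<inter> A)) = mu p (A \<union> (S - A)) (\<lambda>E. P (E \<inter> A) \<and> (\<lambda>_. True) (E \<inter> (S - A)))"
    using S by simp
  also have "\<dots> = mu p A P * mu p (S - A) (\<lambda>_. True)" by (rule mu_prod) (use fin in auto)
  also have "\<dots> = mu p A P" using mu_True[OF fin(2)] by simp
  finally show ?thesis .
qed

lemma mu_prod2:
  assumes "finite S" "A \<subseteq> S" "B \<subseteq> S" "A \<inter> B = {}"
  shows "mu p S (\<lambda>E. P (E \<inter> A) \<and> Q (E \<inter> B)) = mu p A P * mu p B Q"
proof -
  have fin: "finite A" "finite B" using assms(1,2,3) finite_subset by blast+
  have "mu p S (\<lambda>E. P (E \<inter> A) \<and> Q (E \<inter> B)) =
        mu p S (\<lambda>E. (\<lambda>F. P (F \<inter> A) \<and> Q (F \<inter> B)) (E \<inter> (A \<union> B)))"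
    by (rule mu_cong) (simp add: Int_assoc)
  also have "\<dots> = mu p (A \<union> B) (\<lambda>F. P (F \<inter> A) \<and> Q (F \<inter> B))"
    by (rule mu_restrict) (use assms in auto)
  also have "\<dots> = mu p A P * mu p B Q" by (rule mu_prod) (use fin assms in auto)
  finally show ?thesis .
qed

lemma mu_blocks:
  assumes "finite S" "finite U" "\<And>u. u \<in> U \<Longrightarrow> B u \<subseteq> S"
    and "\<And>u v. u \<in> U \<Longrightarrow> v \<in> U \<Longrightarrow> u \<noteq> v \<Longrightarrow> B u \<inter> B v = {}"
  shows "mu p S (\<lambda>E. \<forall>u\<in>U. Q u (E \<inter> B u)) = (\<Prod>u\<in>U. mu p (B u) (Q u))"
  using assms(2-4)
proof (induction U rule: finite_induct)
  case empty
  then show ?case using mu_True[OF assms(1)] by simp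
next
  case (insert u U)
  let ?R = "\<Union>v\<in>U. B v"
  have R: "?R \<subseteq> S" using insert by auto
  have d: "B u \<inter> ?R = {}" using insert by fastforce
  have "mu p S (\<lambda>E. \<forall>v\<in>insert u U. Q v (E \<inter> B v)) =
        mu p S (\<lambda>E. Q u (E \<inter> B u) \<and> (\<lambda>F. \<forall>v\<in>U. Q v (F \<inter> B v)) (E \<inter> ?R))"
  proof (rule mu_cong)
    fix E
    have "\<And>v. v \<in> U \<Longrightarrow> E \<inter> ?R \<inter> B v = E \<inter> B v" by auto
    then show "(\<forall>v\<in>insert u U. Q v (E \<inter> B v)) = (Q u (E \<inter> B u) \<and> (\<forall>v\<in>U. Q v (E \<inter> ?R \<inter> B v)))"
      by auto
  qed
  also have "\<dots> = mu p (B u) (Q u) * mu p ?R (\<lambda>F. \<forall>v\<in>U. Q v (F \<inter> B v))"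
    by (rule mu_prod2) (use insert R d assms(1) in auto)
  also have "mu p ?R (\<lambda>F. \<forall>v\<in>U. Q v (F \<inter> B v)) = (\<Prod>v\<in>U. mu p (B v) (Q v))"
  proof -
    have fR: "finite ?R" using R assms(1) finite_subset by blast
    have "mu p S (\<lambda>F. \<forall>v\<in>U. Q v (F \<inter> B v)) = (\<Prod>v\<in>U. mu p (B v) (Q v))"
      using insert by auto
    moreover have "mu p S (\<lambda>F. (\<lambda>G. \<forall>v\<in>U. Q v (G \<inter> B v)) (F \<inter> ?R)) = mu p ?R (\<lambda>G. \<forall>v\<in>U. Q v (G \<inter> B v))"
      by (rule mu_restrict[OF assms(1) R])
    moreover have "mu p S (\<lambda>F. (\<lambda>G. \<forall>v\<in>U. Q v (G \<inter> B v)) (F \<inter> ?R)) = mu p S (\<lambda>F. \<forall>v\<in>U. Q v (F \<inter> B v))"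
    proof (rule mu_cong)
      fix F
      have "\<And>v. v \<in> U \<Longrightarrow> F \<inter> ?R \<inter> B v = F \<inter> B v" by auto
      then show "(\<forall>v\<in>U. Q v (F \<inter> ?R \<inter> B v)) = (\<forall>v\<in>U. Q v (F \<inter> B v))" by auto
    qed
    ultimately show ?thesis by simp
  qed
  finally show ?case using insert by simp
qed

lemma mu_eq_set:
  assumes "finite S" "X \<subseteq> S"
  shows "mu p S (\<lambda>E. E = X) = p ^ card X * (1 - p) ^ (card S - card X)"
proof -
  have "mu p S (\<lambda>E. E = X) = (\<Sum>E\<in>Pow S. if E = X then p ^ card X * (1 - p) ^ (card S - card X) else 0)"
    unfolding mu_def by (rule sum.cong) auto
  also have "\<dots> = p ^ card X * (1 - p) ^ (card S - card X)"
    using assms by (simp add: sum.delta)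
  finally show ?thesis .
qed

lemma mu_master:
  assumes "finite S" "finite U" "A \<subseteq> S" "X \<subseteq> A"
    and "\<And>u. u \<in> U \<Longrightarrow> B u \<subseteq> S"
    and "\<And>u. u \<in> U \<Longrightarrow> A \<inter> B u = {}"
    and "\<And>u v. u \<in> U \<Longrightarrow> v \<in> U \<Longrightarrow> u \<noteq> v \<Longrightarrow> B u \<inter> B v = {}"
  shows "mu p S (\<lambda>E. E \<inter> A = X \<and> (\<forall>u\<in>U. Q u (E \<inter> B u))) =
     p ^ card X * (1 - p) ^ (card A - card X) * (\<Prod>u\<in>U. mu p (B u) (Q u))"
proof -
  let ?R = "\<Union>u\<in>U. B u"
  have R: "?R \<subseteq> S" using assms by auto
  have d: "A \<inter> ?R = {}" using assms(6) by blast
  have fA: "finite A" "finite ?R" using assms(1,3) R finite_subset by blast+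
  have "mu p S (\<lambda>E. E \<inter> A = X \<and> (\<forall>u\<in>U. Q u (E \<inter> B u))) =
        mu p S (\<lambda>E. (\<lambda>F. F = X) (E \<inter> A) \<and> (\<lambda>F. \<forall>u\<in>U. Q u (F \<inter> B u)) (E \<inter> ?R))"
  proof (rule mu_cong)
    fix E
    have "\<And>v. v \<in> U \<Longrightarrow> E \<inter> ?R \<inter> B v = E \<inter> B v" by auto
    then show "(E \<inter> A = X \<and> (\<forall>u\<in>U. Q u (E \<inter> B u))) = (E \<inter> A = X \<and> (\<forall>u\<in>U. Q u (E \<inter> ?R \<inter> B u)))"
      by auto
  qed
  also have "\<dots> = mu p A (\<lambda>F. F = X) * mu p ?R (\<lambda>F. \<forall>u\<in>U. Q u (F \<inter> B u))"
    by (rule mu_prod2) (use assms R d in auto)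
  also have "mu p ?R (\<lambda>F. \<forall>u\<in>U. Q u (F \<inter> B u)) = (\<Prod>u\<in>U. mu p (B u) (Q u))"
    by (rule mu_blocks) (use assms fA in auto)
  also have "mu p A (\<lambda>F. F = X) = p ^ card X * (1 - p) ^ (card A - card X)"
    by (rule mu_eq_set) (use assms fA in auto)
  finally show ?thesis .
qed

lemma mu_not_eq_set:
  assumes "finite S" "X \<subseteq> S"
  shows "mu p S (\<lambda>E. E \<noteq> X) = 1 - p ^ card X * (1 - p) ^ (card S - card X)"
  using mu_not[OF assms(1), of "\<lambda>E. E = X"] mu_eq_set[OF assms] by simp

lemma mu_single_in:
  assumes "finite S" "e \<in> S"
  shows "mu p S (\<lambda>E. e \<in> E) = p"
proof -
  have "mu p S (\<lambda>E. e \<in> E) = mu p S (\<lambda>E. (\<lambda>F. F = {e}) (E \<inter> {e}))"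
    by (rule mu_cong) auto
  also have "\<dots> = mu p {e} (\<lambda>F. F = {e})" by (rule mu_restrict) (use assms in auto)
  also have "\<dots> = p" by (subst mu_eq_set) auto
  finally show ?thesis .
qed

end


lemma reach_in_sym: "reach_in E S x y \<Longrightarrow> reach_in E S y x"
proof -
  have "symp (\<lambda>x y. x \<in> S \<and> y \<in> S \<and> {x, y} \<in> E)"
    by (auto simp: symp_def insert_commute)
  then have "symp (reach_in E S)" unfolding reach_in_def by (rule symp_rtranclp)
  then show "reach_in E S x y \<Longrightarrow> reach_in E S y x" by (meson sympD)
qed

lemma reach_in_trans: "reach_in E S x y \<Longrightarrow> reach_in E S y z \<Longrightarrow> reach_in E S x z"
  unfolding reach_in_def by (rule rtranclp_trans)

lemma reach_in_refl: "reach_in E S x x"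
  unfolding reach_in_def by simp

lemma reach_in_step: "x \<in> S \<Longrightarrow> y \<in> S \<Longrightarrow> {x, y} \<in> E \<Longrightarrow> reach_in E S x y"
  unfolding reach_in_def by (rule r_into_rtranclp) simp

lemma reach_in_mem: "reach_in E S x y \<Longrightarrow> x \<noteq> y \<Longrightarrow> x \<in> S \<and> y \<in> S"
  unfolding reach_in_def by (induction rule: rtranclp_induct) auto

lemma reach_in_first: "reach_in E S x y \<Longrightarrow> x \<noteq> y \<Longrightarrow> \<exists>z. z \<in> S \<and> x \<in> S \<and> {x, z} \<in> E \<and> reach_in E S z y"
  unfolding reach_in_def by (induction rule: converse_rtranclp_induct) auto

lemma bfs_tree:
  assumes "r \<in> S" "finite S" "\<And>x. {x} \<notin> E"
  shows "\<exists>T. T \<subseteq> E \<and> T \<subseteq> {{x, y} |x y. x \<in> component_in E S r \<and> y \<in> component_in E S r \<and> x \<noteq> y}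
            \<and> card T = card (component_in E S r) - 1"
proof -
  define R where "R = (\<lambda>x y. x \<in> S \<and> y \<in> S \<and> {x, y} \<in> E)"
  define C where "C = component_in E S r"
  have reach: "reach_in E S = R\<^sup>*\<^sup>*" unfolding reach_in_def R_def by simp
  define d where "d = (\<lambda>v. LEAST m. (R ^^ m) r v)"
  have finC: "finite C" unfolding C_def component_in_def using assms(2) by simp
  have rC: "r \<in> C" unfolding C_def component_in_def using assms(1) reach_in_refl by auto
  have dv: "(R ^^ d v) r v" if "v \<in> C" for v
  proof -
    from that have "R\<^sup>*\<^sup>* r v" unfolding C_def component_in_def reach by simp
    then obtain m where "(R ^^ m) r v" using rtranclp_imp_relpowp by metis
    then show ?thesis unfolding d_def by (rule LeastI)
  qed
  have par_ex: "\<exists>w. w \<in> C \<and> {w, v} \<in> E \<and> d w < d v \<and> w \<noteq> v" if "v \<in> C - {r}" for v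
  proof -
    have v: "v \<in> C" "v \<noteq> r" using that by auto
    have "d v \<noteq> 0" using dv[OF v(1)] v(2) by (cases "d v") auto
    then obtain m where m: "d v = Suc m" by (cases "d v") auto
    from dv[OF v(1)] m obtain w where w1: "(R ^^ m) r w" and w2: "R w v"
      by (auto elim: relpowp_Suc_E)
    have "R\<^sup>*\<^sup>* r w" using w1 by (rule relpowp_imp_rtranclp)
    then have wC: "w \<in> C" using w2 unfolding C_def component_in_def reach R_def by simp
    have "d w \<le> m" unfolding d_def using w1 by (rule Least_le)
    moreover have "w \<noteq> v" using w2 assms(3) unfolding R_def by auto
    ultimately show ?thesis using wC w2 m unfolding R_def by auto
  qed
  then obtain par where par: "\<And>v. v \<in> C - {r} \<Longrightarrow> par v \<in> C \<and> {par v, v} \<in> E \<and> d (par v) < d v \<and> par v \<noteq> v"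
    by metis
  define T where "T = (\<lambda>v. {par v, v}) ` (C - {r})"
  have inj: "inj_on (\<lambda>v. {par v, v}) (C - {r})"
  proof (rule inj_onI)
    fix v w assume v: "v \<in> C - {r}" and w: "w \<in> C - {r}" and eq: "{par v, v} = {par w, w}"
    show "v = w"
    proof (rule ccontr)
      assume "v \<noteq> w"
      then have "v = par w" "w = par v" using eq by (auto simp: doubleton_eq_iff)
      then show False using par[OF v] par[OF w] by simp
    qed
  qed
  have "card T = card C - 1" unfolding T_def using card_image[OF inj] finC rC by simp
  moreover have "T \<subseteq> E" unfolding T_def using par by auto
  moreover have "T \<subseteq> {{x, y} |x y. x \<in> C \<and> y \<in> C \<and> x \<noteq> y}" unfolding T_def using par by fastforce
  ultimately show ?thesis unfolding C_def by blast
qed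

definition pairs_in :: "nat set \<Rightarrow> nat set set" where
  "pairs_in C = {{x, y} |x y. x \<in> C \<and> y \<in> C \<and> x \<noteq> y}"

definition ev3 :: "nat \<Rightarrow> nat \<Rightarrow> nat \<Rightarrow> nat \<Rightarrow> nat set set \<Rightarrow> bool" where
  "ev3 n a x y E \<longleftrightarrow> E \<inter> {{a, x}, {a, y}, {x, y}} = {} \<and>
     (\<forall>z\<in>{0..<n} - {a, x, y}. E \<inter> {{z, x}, {z, y}, {z, a}} \<noteq> {{z, x}, {z, y}})"

definition A5 :: "nat \<Rightarrow> nat \<Rightarrow> nat \<Rightarrow> nat \<Rightarrow> nat \<Rightarrow> nat set set" where
  "A5 a x1 x2 y1 y2 = {{x1, x2}, {y1, y2}, {a, x1}, {a, x2}, {a, y1}, {a, y2},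
      {x1, y1}, {x1, y2}, {x2, y1}, {x2, y2}}"

definition ev5 :: "nat \<Rightarrow> nat \<Rightarrow> nat \<Rightarrow> nat \<Rightarrow> nat \<Rightarrow> nat \<Rightarrow> nat set set \<Rightarrow> bool" where
  "ev5 n a x1 x2 y1 y2 E \<longleftrightarrow> E \<inter> A5 a x1 x2 y1 y2 = {{x1, x2}, {y1, y2}} \<and>
     (\<forall>z\<in>{0..<n} - {a, x1, x2, y1, y2}. E \<inter> {{z, x1}, {z, y1}, {z, a}} \<noteq> {{z, x1}, {z, y1}})"

definition evM0 :: "nat \<Rightarrow> nat \<Rightarrow> nat set set \<Rightarrow> bool" where
  "evM0 n v E \<longleftrightarrow> E \<inter> (\<lambda>u. {u, v}) ` ({0..<n} - {v}) = {}"

definition evM1 :: "nat \<Rightarrow> nat \<Rightarrow> nat \<Rightarrow> nat set set \<Rightarrow> bool" where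
  "evM1 n v u E \<longleftrightarrow> E \<inter> (\<lambda>w. {w, v}) ` ({0..<n} - {v}) = {{u, v}}"

definition evK1 :: "nat \<Rightarrow> nat \<Rightarrow> nat \<Rightarrow> nat \<Rightarrow> nat \<Rightarrow> nat set set \<Rightarrow> bool" where
  "evK1 n a v u1 u2 E \<longleftrightarrow>
     E \<inter> {{v, u1}, {v, u2}, {a, u1}, {a, u2}, {v, a}} = {{v, u1}, {v, u2}, {a, u1}, {a, u2}} \<and>
     (\<forall>w\<in>{0..<n} - {a, v, u1, u2}. E \<inter> {{w, v}, {w, a}} \<noteq> {{w, v}})"

definition NC :: "nat \<Rightarrow> nat set \<Rightarrow> nat set set" where
  "NC a C = (\<lambda>c. {a, c}) ` C"

definition Bk :: "nat \<Rightarrow> nat set \<Rightarrow> nat \<Rightarrow> nat set set" where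
  "Bk a C u = insert {u, a} ((\<lambda>c. {u, c}) ` C)"

definition evKk :: "nat \<Rightarrow> nat \<Rightarrow> nat set \<Rightarrow> nat set set \<Rightarrow> nat set set \<Rightarrow> bool" where
  "evKk n a C T E \<longleftrightarrow> E \<inter> (T \<union> NC a C) = T \<and>
     (\<forall>u\<in>{0..<n} - C - {a}. E \<inter> Bk a C u = {} \<or> {u, a} \<in> E \<inter> Bk a C u)"

lemma all_pairs_single: "{x} \<notin> all_pairs n"
  unfolding all_pairs_def by (auto simp: doubleton_eq_iff)

lemma all_pairs_mem: "{x, y} \<in> all_pairs n \<longleftrightarrow> x < n \<and> y < n \<and> x \<noteq> y"
  unfolding all_pairs_def by (auto simp: doubleton_eq_iff)

lemma star_S_iff:
  "x \<in> {0..<n} - star E a \<longleftrightarrow> x < n \<and> x \<noteq> a \<and> {a, x} \<notin> E"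
  unfolding star_def by auto

lemma not_connected_pair:
  assumes "\<not> connected_in E S"
  obtains x y where "x \<in> S" "y \<in> S" "\<not> reach_in E S x y"
  using assms unfolding connected_in_def by blast

lemma component_eq_if_reach:
  assumes "reach_in E S x y"
  shows "component_in E S x = component_in E S y"
  unfolding component_in_def using assms reach_in_sym reach_in_trans by blast


lemma int_eq_mem: "E \<inter> A = X \<Longrightarrow> x \<in> X \<Longrightarrow> x \<in> E" by blast
lemma int_eq_nmem: "E \<inter> A = X \<Longrightarrow> x \<in> A \<Longrightarrow> x \<notin> X \<Longrightarrow> x \<notin> E" by blast

lemma dense1_struct:
  assumes E: "E \<subseteq> all_pairs n" and scv: "star_cut_vertex n E a"
  shows "\<exists>x\<in>{0..<n}. \<exists>y\<in>{0..<n}. a \<noteq> x \<and> a \<noteq> y \<and> x \<noteq> y \<and> ev3 n a x y E"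
proof -
  define S where "S = {0..<n} - star E a"
  have an: "a < n" using scv unfolding star_cut_vertex_def by simp
  obtain x y where xy: "x \<in> S" "y \<in> S" "\<not> reach_in E S x y"
    using scv unfolding star_cut_vertex_def S_def by (metis not_connected_pair)
  have x: "x < n" "x \<noteq> a" "{a, x} \<notin> E" using xy(1) unfolding S_def star_S_iff by auto
  have y: "y < n" "y \<noteq> a" "{a, y} \<notin> E" using xy(2) unfolding S_def star_S_iff by auto
  have "x \<noteq> y" using xy reach_in_refl by metis
  have exy: "{x, y} \<notin> E" using xy reach_in_step by metis
  have "\<forall>z\<in>{0..<n} - {a, x, y}. E \<inter> {{z, x}, {z, y}, {z, a}} \<noteq> {{z, x}, {z, y}}"
  proof (intro ballI notI)
    fix z assume z: "z \<in> {0..<n} - {a, x, y}" and eq: "E \<inter> {{z, x}, {z, y}, {z, a}} = {{z, x}, {z, y}}"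
    have ne: "{z, a} \<noteq> {z, x}" "{z, a} \<noteq> {z, y}" using x y z by (auto simp: doubleton_eq_iff)
    have e: "{z, x} \<in> E" "{z, y} \<in> E" "{z, a} \<notin> E"
      using int_eq_mem[OF eq] int_eq_nmem[OF eq] ne by auto
    have zS: "z \<in> S" unfolding S_def star_S_iff using z e(3) by (auto simp: insert_commute)
    have "reach_in E S x z" using reach_in_step[OF xy(1) zS] e(1) by (simp add: insert_commute)
    moreover have "reach_in E S z y" using reach_in_step[OF zS xy(2)] e(2) by simp
    ultimately show False using xy(3) reach_in_trans by metis
  qed
  then have "ev3 n a x y E" unfolding ev3_def using x y exy by auto
  moreover have "x \<in> {0..<n}" "y \<in> {0..<n}" using x y by auto
  moreover have "a \<noteq> x" "a \<noteq> y" using x y by auto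
  ultimately show ?thesis using \<open>x \<noteq> y\<close> by blast
qed

lemma comp_other:
  assumes "x \<in> S" "card (component_in E S x) > 1" "finite S"
  shows "\<exists>z. z \<in> S \<and> {x, z} \<in> E \<and> reach_in E S x z"
proof -
  have "component_in E S x \<noteq> {x}" using assms(2) by auto
  moreover have "x \<in> component_in E S x" unfolding component_in_def using assms(1) reach_in_refl by auto
  ultimately obtain w where w: "w \<in> component_in E S x" "w \<noteq> x" by blast
  then have "reach_in E S x w" unfolding component_in_def by simp
  then obtain z where "z \<in> S" "{x, z} \<in> E" using reach_in_first w(2) by metis
  then show ?thesis using assms(1) reach_in_step by metis
qed

lemma dense2_struct:
  assumes E: "E \<subseteq> all_pairs n" and an: "a < n"
    and nb: "\<not> at_most_one_big_component E ({0..<n} - star E a)"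
  shows "\<exists>x1\<in>{0..<n}. \<exists>x2\<in>{0..<n}. \<exists>y1\<in>{0..<n}. \<exists>y2\<in>{0..<n}.
           distinct [a, x1, x2, y1, y2] \<and> ev5 n a x1 x2 y1 y2 E"
proof -
  define S where "S = {0..<n} - star E a"
  have finS: "finite S" unfolding S_def by simp
  obtain x y where xy: "x \<in> S" "y \<in> S" "card (component_in E S x) > 1" "card (component_in E S y) > 1"
    "component_in E S x \<noteq> component_in E S y"
    using nb unfolding at_most_one_big_component_def S_def by blast
  have nr: "\<not> reach_in E S x y" using xy(5) component_eq_if_reach by metis
  obtain x2 where x2: "x2 \<in> S" "{x, x2} \<in> E" "reach_in E S x x2" using comp_other xy(1,3) finS by metis
  obtain y2 where y2: "y2 \<in> S" "{y, y2} \<in> E" "reach_in E S y y2" using comp_other xy(2,4) finS by metis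
  have mem: "\<And>w. w \<in> S \<Longrightarrow> w < n \<and> w \<noteq> a \<and> {a, w} \<notin> E" unfolding S_def star_S_iff by simp
  have nr2: "\<not> reach_in E S u w" if "reach_in E S x u" "reach_in E S y w" for u w
    using that nr reach_in_sym reach_in_trans by metis
  have d1: "x \<noteq> x2" "y \<noteq> y2" using x2(2) y2(2) E all_pairs_single by auto
  have r1: "reach_in E S x x" "reach_in E S y y" by (rule reach_in_refl)+
  have n1: "\<not> reach_in E S x y" "\<not> reach_in E S x y2" "\<not> reach_in E S x2 y" "\<not> reach_in E S x2 y2"
    using nr2[OF r1(1) r1(2)] nr2[OF r1(1) y2(3)] nr2[OF x2(3) r1(2)] nr2[OF x2(3) y2(3)] by auto
  have d2: "x \<noteq> y" "x \<noteq> y2" "x2 \<noteq> y" "x2 \<noteq> y2"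
    using n1 reach_in_refl by fastforce+
  have ne: "{x, y} \<notin> E" "{x, y2} \<notin> E" "{x2, y} \<notin> E" "{x2, y2} \<notin> E"
    using n1 reach_in_step[of _ S _ E] xy(1,2) x2(1) y2(1) by blast+
  have ma: "{a, x} \<notin> E" "{a, x2} \<notin> E" "{a, y} \<notin> E" "{a, y2} \<notin> E"
    "x < n" "x2 < n" "y < n" "y2 < n" "x \<noteq> a" "x2 \<noteq> a" "y \<noteq> a" "y2 \<noteq> a"
    using mem xy(1,2) x2(1) y2(1) by auto
  have dist: "distinct [a, x, x2, y, y2]" using d1 d2 ma by auto
  have A: "E \<inter> A5 a x x2 y y2 = {{x, x2}, {y, y2}}"
    unfolding A5_def using x2(2) y2(2) ne ma by auto
  have "\<forall>z\<in>{0..<n} - {a, x, x2, y, y2}. E \<inter> {{z, x}, {z, y}, {z, a}} \<noteq> {{z, x}, {z, y}}"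
  proof (intro ballI notI)
    fix z assume z: "z \<in> {0..<n} - {a, x, x2, y, y2}" and eq: "E \<inter> {{z, x}, {z, y}, {z, a}} = {{z, x}, {z, y}}"
    have ne': "{z, a} \<noteq> {z, x}" "{z, a} \<noteq> {z, y}" using ma z by (auto simp: doubleton_eq_iff)
    have e: "{z, x} \<in> E" "{z, y} \<in> E" "{z, a} \<notin> E"
      using int_eq_mem[OF eq] int_eq_nmem[OF eq] ne' by auto
    have zS: "z \<in> S" unfolding S_def star_S_iff using z e(3) by (auto simp: insert_commute)
    have "reach_in E S x z" using reach_in_step[OF xy(1) zS] e(1) by (simp add: insert_commute)
    moreover have "reach_in E S z y" using reach_in_step[OF zS xy(2)] e(2) by simp
    ultimately show False using nr reach_in_trans by metis
  qed
  then have "ev5 n a x x2 y y2 E" unfolding ev5_def using A by simp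
  moreover have "x \<in> {0..<n}" "y \<in> {0..<n}" "x2 \<in> {0..<n}" "y2 \<in> {0..<n}" using ma by auto
  ultimately show ?thesis using dist by blast
qed

lemma sparse_struct:
  assumes E: "E \<subseteq> all_pairs n" and scv: "star_cut_vertex n E a"
  shows "(\<exists>v\<in>{0..<n}. evM0 n v E \<or> (\<exists>u\<in>{0..<n}. u \<noteq> v \<and> evM1 n v u E))
       \<or> (\<exists>v\<in>{0..<n}. \<exists>u1\<in>{0..<n}. \<exists>u2\<in>{0..<n}. distinct [a, v, u1, u2] \<and> evK1 n a v u1 u2 E)
       \<or> (\<exists>C\<in>{C. C \<subseteq> {0..<n} - {a} \<and> 2 \<le> card C \<and> 2 * card C \<le> n - 1}.
            \<exists>T\<in>{T. T \<subseteq> pairs_in C \<and> card T = card C - 1}. evKk n a C T E)"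
proof -
  define S where "S = {0..<n} - star E a"
  have finS: "finite S" unfolding S_def by simp
  have an: "a < n" using scv unfolding star_cut_vertex_def by simp
  have mem: "\<And>w. w \<in> S \<longleftrightarrow> w < n \<and> w \<noteq> a \<and> {a, w} \<notin> E" unfolding S_def star_S_iff by simp
  have SV: "S \<subseteq> {0..<n} - {a}" unfolding S_def star_def by auto
  have sing: "\<And>x. {x} \<notin> E" using E all_pairs_single by blast
  obtain x y where xy: "x \<in> S" "y \<in> S" "\<not> reach_in E S x y"
    using scv unfolding star_cut_vertex_def S_def by (metis not_connected_pair)
  define Cx where "Cx = component_in E S x"
  define Cy where "Cy = component_in E S y"
  have CxS: "Cx \<subseteq> S" "Cy \<subseteq> S" unfolding Cx_def Cy_def component_in_def by auto
  have disj: "Cx \<inter> Cy = {}"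
  proof (rule ccontr)
    assume "Cx \<inter> Cy \<noteq> {}"
    then obtain z where "reach_in E S x z" "reach_in E S y z" unfolding Cx_def Cy_def component_in_def by auto
    then show False using xy(3) reach_in_sym reach_in_trans by metis
  qed
  have finC: "finite Cx" "finite Cy" using CxS finS finite_subset by blast+
  have "card Cx + card Cy = card (Cx \<union> Cy)" using card_Un_disjoint[OF finC disj] by simp
  also have "\<dots> \<le> card S" using CxS finS by (intro card_mono) auto
  also have "\<dots> \<le> card ({0..<n} - {a})" using SV by (intro card_mono) auto
  also have "\<dots> = n - 1" using an by simp
  finally have csum: "card Cx + card Cy \<le> n - 1" .
  obtain r where r: "r \<in> S" "2 * card (component_in E S r) \<le> n - 1"
  proof (cases "card Cx \<le> card Cy")
    case True
    then show ?thesis using that[of x] xy(1) csum unfolding Cx_def by auto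
  next
    case False
    then show ?thesis using that[of y] xy(2) csum unfolding Cy_def by auto
  qed
  define C where "C = component_in E S r"
  have CS: "C \<subseteq> S" unfolding C_def component_in_def by auto
  have rC: "r \<in> C" unfolding C_def component_in_def using r(1) reach_in_refl by auto
  have fC: "finite C" using CS finS finite_subset by blast
  have P2: "\<And>c. c \<in> C \<Longrightarrow> {a, c} \<notin> E" using CS mem by auto
  have P3: "{u, c} \<notin> E" if "u < n" "u \<notin> C" "u \<noteq> a" "{u, a} \<notin> E" "c \<in> C" for u c
  proof
    assume uc: "{u, c} \<in> E"
    have uS: "u \<in> S" using that mem by (auto simp: insert_commute)
    have "reach_in E S r c" using that(5) unfolding C_def component_in_def by simp
    moreover have "reach_in E S c u" using reach_in_step[of c S u E] uS CS that(5) uc by (auto simp: insert_commute)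
    ultimately have "reach_in E S r u" using reach_in_trans by metis
    then have "u \<in> C" using uS unfolding C_def component_in_def by simp
    then show False using that(2) by simp
  qed
  have CsubV: "C \<subseteq> {0..<n} - {a}" using CS SV by auto
  have c1: "card C \<ge> 1" using rC fC by (simp add: Suc_le_eq card_gt_0_iff) blast
  show ?thesis
  proof (cases "card C = 1")
    case True
    then have Cr: "C = {r}" using rC by (metis card_1_singletonE singletonD)
    define N where "N = {u \<in> {0..<n}. {u, r} \<in> E}"
    have rn: "r < n" "r \<noteq> a" "{a, r} \<notin> E" using r(1) mem by auto
    show ?thesis
    proof (cases "\<exists>u1\<in>N. \<exists>u2\<in>N. u1 \<noteq> u2")
      case False
      then have "N = {} \<or> (\<exists>u. N = {u})" by blast
      then show ?thesis
      proof
        assume N0: "N = {}"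
        have "evM0 n r E" unfolding evM0_def using N0 unfolding N_def by auto
        then show ?thesis using rn by auto
      next
        assume "\<exists>u. N = {u}"
        then obtain u where Nu: "N = {u}" by blast
        have u: "u < n" "{u, r} \<in> E" using Nu unfolding N_def by auto
        have ur: "u \<noteq> r" using u(2) sing by auto
        have "E \<inter> (\<lambda>w. {w, r}) ` ({0..<n} - {r}) = {{u, r}}"
        proof
          show "E \<inter> (\<lambda>w. {w, r}) ` ({0..<n} - {r}) \<subseteq> {{u, r}}"
          proof
            fix e assume "e \<in> E \<inter> (\<lambda>w. {w, r}) ` ({0..<n} - {r})"
            then have eE: "e \<in> E" and eI: "e \<in> (\<lambda>w. {w, r}) ` ({0..<n} - {r})" by auto
            from eI obtain w where w0: "e = {w, r}" "w \<in> {0..<n} - {r}" by (rule imageE)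
            then have w: "e = {w, r}" "w < n" "{w, r} \<in> E" using eE by auto
            then have "w \<in> N" unfolding N_def by simp
            then show "e \<in> {{u, r}}" using Nu w by simp
          qed
          show "{{u, r}} \<subseteq> E \<inter> (\<lambda>w. {w, r}) ` ({0..<n} - {r})" using u ur by auto
        qed
        then have "evM1 n r u E" unfolding evM1_def .
        then show ?thesis
          apply -
          apply (rule disjI1)
          apply (rule bexI[of _ r])
          apply (rule disjI2)
          apply (rule bexI[of _ u])
          using rn u ur by auto
      qed
    next
      case True
      then obtain u1 u2 where u: "u1 \<in> N" "u2 \<in> N" "u1 \<noteq> u2" by blast
      have un: "u1 < n" "u2 < n" "{u1, r} \<in> E" "{u2, r} \<in> E" using u unfolding N_def by auto
      have ua: "u1 \<noteq> a" "u2 \<noteq> a" using un(3,4) rn(3) by (auto simp: insert_commute)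
      have ur: "u1 \<noteq> r" "u2 \<noteq> r" using un(3,4) sing by auto
      have uaE: "{u1, a} \<in> E" "{u2, a} \<in> E"
        using P3[of u1 r] P3[of u2 r] un ua ur Cr rC by auto
      have A: "E \<inter> {{r, u1}, {r, u2}, {a, u1}, {a, u2}, {r, a}} = {{r, u1}, {r, u2}, {a, u1}, {a, u2}}"
        using un uaE rn(3) by (auto simp: insert_commute)
      have B: "\<forall>w\<in>{0..<n} - {a, r, u1, u2}. E \<inter> {{w, r}, {w, a}} \<noteq> {{w, r}}"
      proof (intro ballI notI)
        fix w assume w: "w \<in> {0..<n} - {a, r, u1, u2}" and eq: "E \<inter> {{w, r}, {w, a}} = {{w, r}}"
        have ne: "{w, a} \<noteq> {w, r}" using rn w by (auto simp: doubleton_eq_iff)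
        have e: "{w, r} \<in> E" "{w, a} \<notin> E" using int_eq_mem[OF eq] int_eq_nmem[OF eq] ne by auto
        show False using P3[of w r] e w Cr rC by auto
      qed
      have "evK1 n a r u1 u2 E" unfolding evK1_def using A B by simp
      moreover have "distinct [a, r, u1, u2]" using rn ua ur u(3) by auto
      ultimately show ?thesis
        apply -
        apply (rule disjI2, rule disjI1)
        apply (rule bexI[of _ r], rule bexI[of _ u1], rule bexI[of _ u2])
        using rn un by auto
    qed
  next
    case False
    then have c2: "card C \<ge> 2" using c1 by simp
    obtain T where T: "T \<subseteq> E" "T \<subseteq> pairs_in C" "card T = card C - 1"
      using bfs_tree[OF r(1) finS sing] unfolding C_def pairs_in_def by blast
    have TC: "\<And>e. e \<in> T \<Longrightarrow> e \<subseteq> C" using T(2) unfolding pairs_in_def by auto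
    have A: "E \<inter> (T \<union> NC a C) = T"
    proof -
      have "E \<inter> NC a C = {}" unfolding NC_def using P2 by auto
      then show ?thesis using T(1) by auto
    qed
    have B: "\<forall>u\<in>{0..<n} - C - {a}. E \<inter> Bk a C u = {} \<or> {u, a} \<in> E \<inter> Bk a C u"
    proof
      fix u assume u: "u \<in> {0..<n} - C - {a}"
      show "E \<inter> Bk a C u = {} \<or> {u, a} \<in> E \<inter> Bk a C u"
      proof (cases "{u, a} \<in> E")
        case True
        then show ?thesis unfolding Bk_def by auto
      next
        case False
        then have "\<forall>c\<in>C. {u, c} \<notin> E" using P3[of u] u by auto
        then show ?thesis using False unfolding Bk_def by auto
      qed
    qed
    have "evKk n a C T E" unfolding evKk_def using A B by simp
    moreover have "C \<in> {C. C \<subseteq> {0..<n} - {a} \<and> 2 \<le> card C \<and> 2 * card C \<le> n - 1}"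
      using CsubV c2 r(2) unfolding C_def by auto
    moreover have "T \<in> {T. T \<subseteq> pairs_in C \<and> card T = card C - 1}" using T by simp
    ultimately show ?thesis
      apply -
      apply (rule disjI2, rule disjI2)
      apply (rule bexI[of _ C])
       apply (rule bexI[of _ T])
      by assumption+
  qed
qed


context
  fixes p :: real
  assumes p0: "0 \<le> p" and p1: "p \<le> 1"
begin

lemma fin_ap: "finite (all_pairs n)"
proof -
  have "all_pairs n \<subseteq> Pow {0..<n}" unfolding all_pairs_def by auto
  then show ?thesis by (rule finite_subset) simp
qed

lemma block3:
  assumes "card {e1, e2, e3} = 3"
  shows "mu p {e1, e2, e3} (\<lambda>F. F \<noteq> {e1, e2}) = 1 - p ^ 2 * (1 - p)"
proof -
  have c2: "card {e1, e2} = 2" using assms by (auto simp: card_insert_if split: if_splits)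
  show ?thesis using mu_not_eq_set[OF p0 p1, of "{e1, e2, e3}" "{e1, e2}"] c2 assms by auto
qed

lemma mu_ev3:
  assumes "a < n" "x < n" "y < n" "a \<noteq> x" "a \<noteq> y" "x \<noteq> y"
  shows "mu p (all_pairs n) (ev3 n a x y) = (1 - p) ^ 3 * (1 - p ^ 2 * (1 - p)) ^ (n - 3)"
proof -
  let ?A = "{{a, x}, {a, y}, {x, y}}"
  let ?U = "{0..<n} - {a, x, y}"
  let ?B = "\<lambda>z. {{z, x}, {z, y}, {z, a}}"
  have cA: "card ?A = 3" using assms by (auto simp: doubleton_eq_iff)
  have cU: "card ?U = n - 3" using assms by (subst card_Diff_subset) auto
  have cB: "\<And>z. z \<in> ?U \<Longrightarrow> card (?B z) = 3" using assms by (auto simp: doubleton_eq_iff)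
  have "mu p (all_pairs n) (ev3 n a x y) =
        mu p (all_pairs n) (\<lambda>E. E \<inter> ?A = {} \<and> (\<forall>z\<in>?U. (\<lambda>z F. F \<noteq> {{z, x}, {z, y}}) z (E \<inter> ?B z)))"
    unfolding ev3_def by simp
  also have "\<dots> = p ^ card ({}::nat set set) * (1 - p) ^ (card ?A - card ({}::nat set set)) *
       (\<Prod>z\<in>?U. mu p (?B z) (\<lambda>F. F \<noteq> {{z, x}, {z, y}}))"
    by (rule mu_master[OF p0 p1]) (use assms fin_ap in \<open>auto simp: all_pairs_mem doubleton_eq_iff\<close>)
  also have "(\<Prod>z\<in>?U. mu p (?B z) (\<lambda>F. F \<noteq> {{z, x}, {z, y}})) = (\<Prod>z\<in>?U. 1 - p ^ 2 * (1 - p))"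
  proof (rule prod.cong[OF refl])
    fix z assume "z \<in> ?U"
    then show "mu p (?B z) (\<lambda>F. F \<noteq> {{z, x}, {z, y}}) = 1 - p ^ 2 * (1 - p)"
      using block3[OF cB] by simp
  qed
  finally show ?thesis using cA cU by simp
qed


lemma mu_set_only:
  assumes "finite S" "A \<subseteq> S" "X \<subseteq> A"
  shows "mu p S (\<lambda>E. E \<inter> A = X) = p ^ card X * (1 - p) ^ (card A - card X)"
proof -
  have "mu p S (\<lambda>E. E \<inter> A = X) = mu p A (\<lambda>F. F = X)"
    by (rule mu_restrict[OF p0 p1 assms(1,2)])
  also have "\<dots> = p ^ card X * (1 - p) ^ (card A - card X)"
    by (rule mu_eq_set[OF p0 p1]) (use assms finite_subset in auto)
  finally show ?thesis .
qed

lemma mu_ev5: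
  assumes "a < n" "x1 < n" "x2 < n" "y1 < n" "y2 < n" "distinct [a, x1, x2, y1, y2]"
  shows "mu p (all_pairs n) (ev5 n a x1 x2 y1 y2) = p ^ 2 * (1 - p) ^ 8 * (1 - p ^ 2 * (1 - p)) ^ (n - 5)"
proof -
  let ?A = "A5 a x1 x2 y1 y2"
  let ?X = "{{x1, x2}, {y1, y2}}"
  let ?U = "{0..<n} - {a, x1, x2, y1, y2}"
  let ?B = "\<lambda>z. {{z, x1}, {z, y1}, {z, a}}"
  have cA: "card ?A = 10" using assms unfolding A5_def by (auto simp: doubleton_eq_iff)
  have cX: "card ?X = 2" using assms by (auto simp: doubleton_eq_iff)
  have cU: "card ?U = n - 5" using assms by (subst card_Diff_subset) auto
  have cB: "\<And>z. z \<in> ?U \<Longrightarrow> card (?B z) = 3" using assms by (auto simp: doubleton_eq_iff)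
  have "mu p (all_pairs n) (ev5 n a x1 x2 y1 y2) =
        mu p (all_pairs n) (\<lambda>E. E \<inter> ?A = ?X \<and> (\<forall>z\<in>?U. (\<lambda>z F. F \<noteq> {{z, x1}, {z, y1}}) z (E \<inter> ?B z)))"
    unfolding ev5_def by simp
  also have "\<dots> = p ^ card ?X * (1 - p) ^ (card ?A - card ?X) *
       (\<Prod>z\<in>?U. mu p (?B z) (\<lambda>F. F \<noteq> {{z, x1}, {z, y1}}))"
    by (rule mu_master[OF p0 p1]) (use assms fin_ap in \<open>auto simp: A5_def all_pairs_mem doubleton_eq_iff\<close>)
  also have "(\<Prod>z\<in>?U. mu p (?B z) (\<lambda>F. F \<noteq> {{z, x1}, {z, y1}})) = (\<Prod>z\<in>?U. 1 - p ^ 2 * (1 - p))"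
  proof (rule prod.cong[OF refl])
    fix z assume "z \<in> ?U"
    then show "mu p (?B z) (\<lambda>F. F \<noteq> {{z, x1}, {z, y1}}) = 1 - p ^ 2 * (1 - p)"
      using block3[OF cB] by simp
  qed
  finally show ?thesis using cA cU cX by simp
qed

lemma mu_evM0:
  assumes "v < n"
  shows "mu p (all_pairs n) (evM0 n v) = (1 - p) ^ (n - 1)"
proof -
  have inj: "inj_on (\<lambda>u. {u, v}) ({0..<n} - {v})" by (auto simp: inj_on_def doubleton_eq_iff)
  have c: "card ((\<lambda>u. {u, v}) ` ({0..<n} - {v})) = n - 1" using card_image[OF inj] assms by simp
  have "mu p (all_pairs n) (evM0 n v) = mu p (all_pairs n) (\<lambda>E. E \<inter> (\<lambda>u. {u, v}) ` ({0..<n} - {v}) = {})"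
    unfolding evM0_def by simp
  also have "\<dots> = p ^ card ({}::nat set set) * (1 - p) ^ (card ((\<lambda>u. {u, v}) ` ({0..<n} - {v})) - card ({}::nat set set))"
    by (rule mu_set_only) (use fin_ap assms in \<open>auto simp: all_pairs_mem\<close>)
  finally show ?thesis using c by simp
qed

lemma mu_evM1:
  assumes "v < n" "u < n" "u \<noteq> v"
  shows "mu p (all_pairs n) (evM1 n v u) = p * (1 - p) ^ (n - 2)"
proof -
  have inj: "inj_on (\<lambda>u. {u, v}) ({0..<n} - {v})" by (auto simp: inj_on_def doubleton_eq_iff)
  have c: "card ((\<lambda>u. {u, v}) ` ({0..<n} - {v})) = n - 1" using card_image[OF inj] assms by simp
  have "mu p (all_pairs n) (evM1 n v u) = mu p (all_pairs n) (\<lambda>E. E \<inter> (\<lambda>u. {u, v}) ` ({0..<n} - {v}) = {{u, v}})"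
    unfolding evM1_def by simp
  also have "\<dots> = p ^ card {{u, v}} * (1 - p) ^ (card ((\<lambda>u. {u, v}) ` ({0..<n} - {v})) - card {{u, v}})"
    by (rule mu_set_only) (use fin_ap assms in \<open>auto simp: all_pairs_mem\<close>)
  finally show ?thesis using c by (simp add: diff_diff_add numeral_2_eq_2)
qed

lemma mu_evK1:
  assumes "a < n" "v < n" "u1 < n" "u2 < n" "distinct [a, v, u1, u2]"
  shows "mu p (all_pairs n) (evK1 n a v u1 u2) = p ^ 4 * (1 - p) * (1 - p * (1 - p)) ^ (n - 4)"
proof -
  let ?A = "{{v, u1}, {v, u2}, {a, u1}, {a, u2}, {v, a}}"
  let ?X = "{{v, u1}, {v, u2}, {a, u1}, {a, u2}}"
  let ?U = "{0..<n} - {a, v, u1, u2}"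
  let ?B = "\<lambda>w. {{w, v}, {w, a}}"
  have cA: "card ?A = 5" using assms by (auto simp: doubleton_eq_iff)
  have cX: "card ?X = 4" using assms by (auto simp: doubleton_eq_iff)
  have cU: "card ?U = n - 4" using assms by (subst card_Diff_subset) auto
  have "mu p (all_pairs n) (evK1 n a v u1 u2) =
        mu p (all_pairs n) (\<lambda>E. E \<inter> ?A = ?X \<and> (\<forall>w\<in>?U. (\<lambda>w F. F \<noteq> {{w, v}}) w (E \<inter> ?B w)))"
    unfolding evK1_def by simp
  also have "\<dots> = p ^ card ?X * (1 - p) ^ (card ?A - card ?X) *
       (\<Prod>w\<in>?U. mu p (?B w) (\<lambda>F. F \<noteq> {{w, v}}))"
    by (rule mu_master[OF p0 p1]) (use assms fin_ap in \<open>auto simp: all_pairs_mem doubleton_eq_iff\<close>)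
  also have "(\<Prod>w\<in>?U. mu p (?B w) (\<lambda>F. F \<noteq> {{w, v}})) = (\<Prod>w\<in>?U. 1 - p * (1 - p))"
  proof (rule prod.cong[OF refl])
    fix w assume w: "w \<in> ?U"
    have cB: "card (?B w) = 2" using w assms by (auto simp: doubleton_eq_iff)
    show "mu p (?B w) (\<lambda>F. F \<noteq> {{w, v}}) = 1 - p * (1 - p)"
      using mu_not_eq_set[OF p0 p1, of "?B w" "{{w, v}}"] cB by simp
  qed
  finally show ?thesis using cA cU cX by simp
qed


definition evKk' :: "nat \<Rightarrow> nat \<Rightarrow> nat set \<Rightarrow> nat set set \<Rightarrow> bool" where
  "evKk' n a C E \<longleftrightarrow> E \<inter> NC a C = {} \<and>
     (\<forall>u\<in>{0..<n} - C - {a}. E \<inter> Bk a C u = {} \<or> {u, a} \<in> E \<inter> Bk a C u)"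

lemma evKk_imp:
  assumes "a \<notin> C" "T \<subseteq> pairs_in C" "evKk n a C T E"
  shows "evKk' n a C E"
proof -
  have "E \<inter> NC a C \<subseteq> T" using assms(3) unfolding evKk_def by auto
  moreover have "T \<inter> NC a C = {}" using assms(1,2) unfolding pairs_in_def NC_def by (auto simp: doubleton_eq_iff)
  ultimately have "E \<inter> NC a C = {}" by blast
  then show ?thesis using assms(3) unfolding evKk_def evKk'_def by blast
qed

lemma Kk_block:
  assumes "a < n" "C \<subseteq> {0..<n} - {a}" "u \<in> {0..<n} - C - {a}"
  shows "mu p (Bk a C u) (\<lambda>F. F = {} \<or> {u, a} \<in> F) = p + (1 - p) ^ (card C + 1)"
proof -
  have fC: "finite C" using assms(2) finite_subset by blast
  have inj: "inj_on (\<lambda>c. {u, c}) C" by (auto simp: inj_on_def doubleton_eq_iff)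
  have cB: "card (Bk a C u) = card C + 1"
    unfolding Bk_def using assms card_image[OF inj] fC by (subst card_insert_disjoint) (auto simp: doubleton_eq_iff)
  have fB: "finite (Bk a C u)" unfolding Bk_def using fC by simp
  have "mu p (Bk a C u) (\<lambda>F. F = {} \<or> {u, a} \<in> F) = mu p (Bk a C u) (\<lambda>F. F = {}) + mu p (Bk a C u) (\<lambda>F. {u, a} \<in> F)"
    by (rule mu_disj_eq[OF p0 p1]) auto
  also have "mu p (Bk a C u) (\<lambda>F. F = {}) = (1 - p) ^ (card C + 1)"
    using mu_eq_set[OF p0 p1 fB, of "{}"] cB by simp
  also have "mu p (Bk a C u) (\<lambda>F. {u, a} \<in> F) = p"
    by (rule mu_single_in[OF p0 p1 fB]) (simp add: Bk_def)
  finally show ?thesis by simp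
qed

lemma Bk_alt: "Bk a C u = (\<lambda>c. {u, c}) ` (insert a C)"
  unfolding Bk_def by auto

lemma Kk_blocks_ok:
  assumes "a < n" "C \<subseteq> {0..<n} - {a}"
  shows "\<And>u. u \<in> {0..<n} - C - {a} \<Longrightarrow> Bk a C u \<subseteq> all_pairs n"
    and "\<And>u v. u \<in> {0..<n} - C - {a} \<Longrightarrow> v \<in> {0..<n} - C - {a} \<Longrightarrow> u \<noteq> v \<Longrightarrow> Bk a C u \<inter> Bk a C v = {}"
    and "\<And>u. u \<in> {0..<n} - C - {a} \<Longrightarrow> NC a C \<inter> Bk a C u = {}"
    and "NC a C \<subseteq> all_pairs n"
proof -
  fix u assume u: "u \<in> {0..<n} - C - {a}"
  show "Bk a C u \<subseteq> all_pairs n"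
  proof
    fix e assume "e \<in> Bk a C u"
    then obtain c where c: "c \<in> insert a C" "e = {u, c}" unfolding Bk_alt by blast
    then show "e \<in> all_pairs n" using u assms by (auto simp: all_pairs_mem)
  qed
  show "NC a C \<inter> Bk a C u = {}"
  proof (rule ccontr)
    assume "NC a C \<inter> Bk a C u \<noteq> {}"
    then obtain c d where c: "c \<in> C" "d \<in> insert a C" "{a, c} = {u, d}" unfolding Bk_alt NC_def by blast
    then show False using u assms by (auto simp: doubleton_eq_iff)
  qed
next
  fix u v assume u: "u \<in> {0..<n} - C - {a}" and v: "v \<in> {0..<n} - C - {a}" and uv: "u \<noteq> v"
  show "Bk a C u \<inter> Bk a C v = {}"
  proof (rule ccontr)
    assume "Bk a C u \<inter> Bk a C v \<noteq> {}"
    then obtain c d where c: "c \<in> insert a C" "d \<in> insert a C" "{u, c} = {v, d}" unfolding Bk_alt by blast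
    then show False using u v uv by (auto simp: doubleton_eq_iff)
  qed
next
  show "NC a C \<subseteq> all_pairs n"
  proof
    fix e assume "e \<in> NC a C"
    then obtain c where c: "c \<in> C" "e = {a, c}" unfolding NC_def by blast
    then show "e \<in> all_pairs n" using assms by (auto simp: all_pairs_mem)
  qed
qed

lemma mu_evKk':
  assumes "a < n" "C \<subseteq> {0..<n} - {a}"
  shows "mu p (all_pairs n) (evKk' n a C) = (1 - p) ^ card C * (p + (1 - p) ^ (card C + 1)) ^ (n - 1 - card C)"
proof -
  let ?U = "{0..<n} - C - {a}"
  have fC: "finite C" using assms(2) finite_subset by blast
  have inj: "inj_on (\<lambda>c. {a, c}) C" by (auto simp: inj_on_def doubleton_eq_iff)
  have cN: "card (NC a C) = card C" unfolding NC_def using card_image[OF inj] .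
  have cU: "card ?U = n - 1 - card C"
  proof -
    have "?U = ({0..<n} - {a}) - C" by auto
    then have "card ?U = card ({0..<n} - {a}) - card C" using assms fC by (simp add: card_Diff_subset)
    then show ?thesis using assms by simp
  qed
  have "mu p (all_pairs n) (evKk' n a C) =
        mu p (all_pairs n) (\<lambda>E. E \<inter> NC a C = {} \<and> (\<forall>u\<in>?U. (\<lambda>u F. F = {} \<or> {u, a} \<in> F) u (E \<inter> Bk a C u)))"
    unfolding evKk'_def by simp
  also have "\<dots> = p ^ card ({}::nat set set) * (1 - p) ^ (card (NC a C) - card ({}::nat set set)) *
       (\<Prod>u\<in>?U. mu p (Bk a C u) (\<lambda>F. F = {} \<or> {u, a} \<in> F))"
    by (rule mu_master[OF p0 p1]) (use Kk_blocks_ok[OF assms] fin_ap in auto)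
  also have "(\<Prod>u\<in>?U. mu p (Bk a C u) (\<lambda>F. F = {} \<or> {u, a} \<in> F)) = (\<Prod>u\<in>?U. p + (1 - p) ^ (card C + 1))"
    by (rule prod.cong[OF refl]) (rule Kk_block[OF assms])
  finally show ?thesis using cN cU by simp
qed

lemma mu_evKk:
  assumes "a < n" "C \<subseteq> {0..<n} - {a}" "T \<subseteq> pairs_in C" "card T = card C - 1"
  shows "mu p (all_pairs n) (evKk n a C T) = p ^ (card C - 1) * (1 - p) ^ card C * (p + (1 - p) ^ (card C + 1)) ^ (n - 1 - card C)"
proof -
  let ?U = "{0..<n} - C - {a}"
  have fC: "finite C" using assms(2) finite_subset by blast
  have inj: "inj_on (\<lambda>c. {a, c}) C" by (auto simp: inj_on_def doubleton_eq_iff)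
  have cN: "card (NC a C) = card C" unfolding NC_def using card_image[OF inj] .
  have fT: "finite T"
  proof -
    have "pairs_in C \<subseteq> Pow C" unfolding pairs_in_def by auto
    then have "T \<subseteq> Pow C" using assms(3) by (rule order_trans[rotated])
    moreover have "finite (Pow C)" using fC by simp
    ultimately show ?thesis by (rule finite_subset)
  qed
  have fN: "finite (NC a C)" unfolding NC_def using fC by simp
  have TN: "T \<inter> NC a C = {}"
  proof (rule ccontr)
    assume "T \<inter> NC a C \<noteq> {}"
    then obtain x y d where c: "x \<in> C" "y \<in> C" "d \<in> C" "{x, y} = {a, d}"
      using assms(3) unfolding NC_def pairs_in_def by blast
    then show False using assms(2) by (auto simp: doubleton_eq_iff)
  qed
  have cA: "card (T \<union> NC a C) = card T + card C" using card_Un_disjoint[OF fT fN TN] cN by simp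
  have cU: "card ?U = n - 1 - card C"
  proof -
    have "?U = ({0..<n} - {a}) - C" by auto
    then have "card ?U = card ({0..<n} - {a}) - card C" using assms fC by (simp add: card_Diff_subset)
    then show ?thesis using assms by simp
  qed
  have Tap: "T \<subseteq> all_pairs n"
  proof
    fix e assume "e \<in> T"
    then obtain x y where "x \<in> C" "y \<in> C" "x \<noteq> y" "e = {x, y}" using assms(3) unfolding pairs_in_def by blast
    then show "e \<in> all_pairs n" using assms(2) by (auto simp: all_pairs_mem)
  qed
  have TB: "T \<inter> Bk a C u = {}" if u: "u \<in> ?U" for u
  proof (rule ccontr)
    assume "T \<inter> Bk a C u \<noteq> {}"
    then obtain x y d where c: "x \<in> C" "y \<in> C" "d \<in> insert a C" "{x, y} = {u, d}"
      using assms(3) unfolding Bk_alt pairs_in_def by blast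
    then show False using u by (auto simp: doubleton_eq_iff)
  qed
  have "mu p (all_pairs n) (evKk n a C T) =
        mu p (all_pairs n) (\<lambda>E. E \<inter> (T \<union> NC a C) = T \<and> (\<forall>u\<in>?U. (\<lambda>u F. F = {} \<or> {u, a} \<in> F) u (E \<inter> Bk a C u)))"
    unfolding evKk_def by simp
  also have "\<dots> = p ^ card T * (1 - p) ^ (card (T \<union> NC a C) - card T) *
       (\<Prod>u\<in>?U. mu p (Bk a C u) (\<lambda>F. F = {} \<or> {u, a} \<in> F))"
  proof (rule mu_master[OF p0 p1 fin_ap])
    show "(T \<union> NC a C) \<subseteq> all_pairs n" using Tap Kk_blocks_ok(4)[OF assms(1,2)] by blast
    show "\<And>u. u \<in> ?U \<Longrightarrow> (T \<union> NC a C) \<inter> Bk a C u = {}"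
      using TB Kk_blocks_ok(3)[OF assms(1,2)] by (simp add: Int_Un_distrib2)
  qed (use Kk_blocks_ok(1,2)[OF assms(1,2)] in auto)
  also have "(\<Prod>u\<in>?U. mu p (Bk a C u) (\<lambda>F. F = {} \<or> {u, a} \<in> F)) = (\<Prod>u\<in>?U. p + (1 - p) ^ (card C + 1))"
    by (rule prod.cong[OF refl]) (rule Kk_block[OF assms(1,2)])
  finally show ?thesis using cA cU assms(4) by simp
qed

end
definition Kterm :: "nat \<Rightarrow> real \<Rightarrow> nat \<Rightarrow> real" where
  "Kterm n q k = real ((n - 1) choose k) * min (real ((k * k) ^ (k - 1)) / fact (k - 1) * q ^ (k - 1)) 1 *
      ((1 - q) ^ k * (q + (1 - q) ^ (k + 1)) ^ (n - 1 - k))"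

context
  fixes p :: real
  assumes p0: "0 \<le> p" and p1: "p \<le> 1"
begin

lemma mu_ex_nat:
  assumes "\<And>x. x \<in> {0..<n} \<Longrightarrow> mu p S (P x) \<le> c"
  shows "mu p S (\<lambda>E. \<exists>x\<in>{0..<n}. P x E) \<le> real n * c"
  using mu_ex_le_bound[OF p0 p1, of "{0..<n}" S P c] assms by simp

lemma union_dense1:
  "gnp_prob n p (\<lambda>E. \<exists>a. star_cut_vertex n E a) \<le> real n ^ 3 * ((1 - p) ^ 3 * (1 - p ^ 2 * (1 - p)) ^ (n - 3))"
proof -
  let ?v = "(1 - p) ^ 3 * (1 - p ^ 2 * (1 - p)) ^ (n - 3)"
  have v0: "0 \<le> ?v" using p0 p1 by (intro mult_nonneg_nonneg zero_le_power) (auto simp: power2_eq_square mult_le_one)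
  have "gnp_prob n p (\<lambda>E. \<exists>a. star_cut_vertex n E a) \<le>
        mu p (all_pairs n) (\<lambda>E. \<exists>a\<in>{0..<n}. \<exists>x\<in>{0..<n}. \<exists>y\<in>{0..<n}. (a \<noteq> x \<and> a \<noteq> y \<and> x \<noteq> y) \<and> ev3 n a x y E)"
    unfolding gnp_mu
  proof (rule mu_mono[OF p0 p1])
    fix E assume E: "E \<subseteq> all_pairs n" and "\<exists>a. star_cut_vertex n E a"
    then obtain a where a: "star_cut_vertex n E a" by blast
    then have "a \<in> {0..<n}" unfolding star_cut_vertex_def by simp
    then show "\<exists>a\<in>{0..<n}. \<exists>x\<in>{0..<n}. \<exists>y\<in>{0..<n}. (a \<noteq> x \<and> a \<noteq> y \<and> x \<noteq> y) \<and> ev3 n a x y E"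
      using dense1_struct[OF E a] by blast
  qed
  also have "\<dots> \<le> real n * (real n * (real n * ?v))"
  proof (intro mu_ex_nat)
    fix a x y assume "a \<in> {0..<n}" "x \<in> {0..<n}" "y \<in> {0..<n}"
    then show "mu p (all_pairs n) (\<lambda>E. (a \<noteq> x \<and> a \<noteq> y \<and> x \<noteq> y) \<and> ev3 n a x y E) \<le> ?v"
      using mu_ev3[OF p0 p1, of a n x y] v0 by (auto simp: mu_conj_const[OF p0 p1])
  qed
  finally show ?thesis by (simp add: power3_eq_cube mult.assoc)
qed

lemma union_dense2:
  "gnp_prob n p (\<lambda>E. \<exists>a. star_cut_vertex n E a \<and> \<not> at_most_one_big_component E ({0..<n} - star E a))
    \<le> real n ^ 5 * (p ^ 2 * (1 - p) ^ 8 * (1 - p ^ 2 * (1 - p)) ^ (n - 5))"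
proof -
  let ?v = "p ^ 2 * (1 - p) ^ 8 * (1 - p ^ 2 * (1 - p)) ^ (n - 5)"
  have v0: "0 \<le> ?v" using p0 p1 by (intro mult_nonneg_nonneg zero_le_power) (auto simp: power2_eq_square mult_le_one)
  have "gnp_prob n p (\<lambda>E. \<exists>a. star_cut_vertex n E a \<and> \<not> at_most_one_big_component E ({0..<n} - star E a)) \<le>
        mu p (all_pairs n) (\<lambda>E. \<exists>a\<in>{0..<n}. \<exists>x1\<in>{0..<n}. \<exists>x2\<in>{0..<n}. \<exists>y1\<in>{0..<n}. \<exists>y2\<in>{0..<n}.
             distinct [a, x1, x2, y1, y2] \<and> ev5 n a x1 x2 y1 y2 E)"
    unfolding gnp_mu
  proof (rule mu_mono[OF p0 p1])
    fix E assume E: "E \<subseteq> all_pairs n" and "\<exists>a. star_cut_vertex n E a \<and> \<not> at_most_one_big_component E ({0..<n} - star E a)"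
    then obtain a where a: "star_cut_vertex n E a" "\<not> at_most_one_big_component E ({0..<n} - star E a)" by blast
    then have an: "a < n" unfolding star_cut_vertex_def by simp
    show "\<exists>a\<in>{0..<n}. \<exists>x1\<in>{0..<n}. \<exists>x2\<in>{0..<n}. \<exists>y1\<in>{0..<n}. \<exists>y2\<in>{0..<n}.
             distinct [a, x1, x2, y1, y2] \<and> ev5 n a x1 x2 y1 y2 E"
    proof -
      have "a \<in> {0..<n}" using an by simp
      then show ?thesis using dense2_struct[OF E an a(2)] by blast
    qed
  qed
  also have "\<dots> \<le> real n * (real n * (real n * (real n * (real n * ?v))))"
  proof (intro mu_ex_nat)
    fix a x1 x2 y1 y2 assume "a \<in> {0..<n}" "x1 \<in> {0..<n}" "x2 \<in> {0..<n}" "y1 \<in> {0..<n}" "y2 \<in> {0..<n}"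
    then show "mu p (all_pairs n) (\<lambda>E. distinct [a, x1, x2, y1, y2] \<and> ev5 n a x1 x2 y1 y2 E) \<le> ?v"
      using mu_ev5[OF p0 p1, of a n x1 x2 y1 y2] v0 by (auto simp: mu_conj_const[OF p0 p1])
  qed
  finally show ?thesis by (simp add: mult.assoc eval_nat_numeral)
qed


lemma card_pairs_in: "finite C \<Longrightarrow> card (pairs_in C) \<le> card C * card C"
proof -
  assume fC: "finite C"
  have "pairs_in C \<subseteq> (\<lambda>(x, y). {x, y}) ` (C \<times> C)" unfolding pairs_in_def by auto
  then have "card (pairs_in C) \<le> card ((\<lambda>(x, y). {x, y}) ` (C \<times> C))"
    using fC by (intro card_mono) auto
  also have "\<dots> \<le> card (C \<times> C)" by (rule card_image_le) (use fC in simp)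
  finally show ?thesis by (simp add: card_cartesian_product)
qed

lemma finite_pairs_in: "finite C \<Longrightarrow> finite (pairs_in C)"
proof -
  assume fC: "finite C"
  have "pairs_in C \<subseteq> (\<lambda>(x, y). {x, y}) ` (C \<times> C)" unfolding pairs_in_def by auto
  then show ?thesis by (rule finite_subset) (use fC in simp)
qed

lemma card_trees:
  assumes "finite C" "card C = k"
  shows "real (card {T. T \<subseteq> pairs_in C \<and> card T = k - 1}) \<le> real ((k * k) ^ (k - 1)) / fact (k - 1)"
proof -
  let ?m = "card (pairs_in C)"
  have c: "card {T. T \<subseteq> pairs_in C \<and> card T = k - 1} = ?m choose (k - 1)"
    by (rule n_subsets[OF finite_pairs_in[OF assms(1)]])
  have "(?m choose (k - 1)) * fact (k - 1) \<le> ?m ^ (k - 1)" by (rule binomial_fact_pow)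
  also have "\<dots> \<le> (k * k) ^ (k - 1)" using card_pairs_in[OF assms(1)] assms(2) by (intro power_mono) auto
  finally have "real (?m choose (k - 1)) * fact (k - 1) \<le> real ((k * k) ^ (k - 1))"
    by (metis of_nat_fact of_nat_le_iff of_nat_mult)
  then show ?thesis unfolding c by (simp add: field_simps)
qed

lemma C_bound:
  assumes "a < n" "C \<subseteq> {0..<n} - {a}" "card C = k"
  shows "mu p (all_pairs n) (\<lambda>E. \<exists>T\<in>{T. T \<subseteq> pairs_in C \<and> card T = card C - 1}. evKk n a C T E)
     \<le> min (real ((k * k) ^ (k - 1)) / fact (k - 1) * p ^ (k - 1)) 1 * ((1 - p) ^ k * (p + (1 - p) ^ (k + 1)) ^ (n - 1 - k))"
proof -
  let ?R = "(1 - p) ^ k * (p + (1 - p) ^ (k + 1)) ^ (n - 1 - k)"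
  let ?A = "real ((k * k) ^ (k - 1)) / fact (k - 1) * p ^ (k - 1)"
  let ?P = "\<lambda>E. \<exists>T\<in>{T. T \<subseteq> pairs_in C \<and> card T = card C - 1}. evKk n a C T E"
  have fC: "finite C" using assms(2) finite_subset by blast
  have R0: "0 \<le> ?R" using p0 p1 by simp
  have b1: "mu p (all_pairs n) ?P \<le> ?R"
  proof -
    have "mu p (all_pairs n) ?P \<le> mu p (all_pairs n) (evKk' n a C)"
    proof (rule mu_mono[OF p0 p1])
      fix E assume "?P E"
      moreover have aC: "a \<notin> C" using assms(2) by auto
      ultimately show "evKk' n a C E" using evKk_imp[OF p0 p1 aC] by blast
    qed
    also have "\<dots> = ?R" using mu_evKk'[OF p0 p1 assms(1,2)] assms(3) by simp
    finally show ?thesis .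
  qed
  have b2: "mu p (all_pairs n) ?P \<le> ?A * ?R"
  proof -
    have fT: "finite {T. T \<subseteq> pairs_in C \<and> card T = card C - 1}"
      using finite_pairs_in[OF fC] by simp
    have "mu p (all_pairs n) ?P \<le> real (card {T. T \<subseteq> pairs_in C \<and> card T = card C - 1}) * (p ^ (k - 1) * ?R)"
      by (rule mu_ex_le_bound[OF p0 p1 fT]) (use mu_evKk[OF p0 p1 assms(1,2)] assms(3) in simp)
    also have "\<dots> \<le> real ((k * k) ^ (k - 1)) / fact (k - 1) * (p ^ (k - 1) * ?R)"
      using card_trees[OF fC assms(3)] assms(3) p0 R0 by (intro mult_right_mono) auto
    finally show ?thesis by (simp add: mult.assoc)
  qed
  show ?thesis
  proof (cases "?A \<le> 1")
    case True
    then show ?thesis using b2 by (simp add: min_def)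
  next
    case False
    then show ?thesis using b1 by (simp add: min_def)
  qed
qed


lemma union_sparse:
  "gnp_prob n p (\<lambda>E. \<exists>a. star_cut_vertex n E a) \<le>
     real n * ((1 - p) ^ (n - 1) + real n * (p * (1 - p) ^ (n - 2)))
   + real n ^ 4 * (p ^ 4 * (1 - p) * (1 - p * (1 - p)) ^ (n - 4))
   + real n * (\<Sum>k\<in>{k. 2 \<le> k \<and> 2 * k \<le> n - 1}. Kterm n p k)"
proof -
  let ?V = "{0..<n}"
  let ?K = "{k. 2 \<le> k \<and> 2 * k \<le> n - 1}"
  define M where "M = (\<lambda>E. \<exists>v\<in>?V. evM0 n v E \<or> (\<exists>u\<in>?V. u \<noteq> v \<and> evM1 n v u E))"
  define K1 where "K1 = (\<lambda>E. \<exists>a\<in>?V. \<exists>v\<in>?V. \<exists>u1\<in>?V. \<exists>u2\<in>?V. distinct [a, v, u1, u2] \<and> evK1 n a v u1 u2 E)"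
  define KK where "KK = (\<lambda>E. \<exists>a\<in>?V. \<exists>k\<in>?K. \<exists>C\<in>{C. C \<subseteq> ?V - {a} \<and> card C = k}.
          \<exists>T\<in>{T. T \<subseteq> pairs_in C \<and> card T = card C - 1}. evKk n a C T E)"
  have "gnp_prob n p (\<lambda>E. \<exists>a. star_cut_vertex n E a) \<le> mu p (all_pairs n) (\<lambda>E. M E \<or> K1 E \<or> KK E)"
    unfolding gnp_mu
  proof (rule mu_mono[OF p0 p1])
    fix E assume E: "E \<subseteq> all_pairs n" and "\<exists>a. star_cut_vertex n E a"
    then obtain a where a: "star_cut_vertex n E a" by blast
    then have aV: "a \<in> ?V" unfolding star_cut_vertex_def by simp
    note st = sparse_struct[OF E a]
    show "M E \<or> K1 E \<or> KK E"
    proof -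
      have "M E \<or> K1 E \<or> (\<exists>C\<in>{C. C \<subseteq> {0..<n} - {a} \<and> 2 \<le> card C \<and> 2 * card C \<le> n - 1}.
            \<exists>T\<in>{T. T \<subseteq> pairs_in C \<and> card T = card C - 1}. evKk n a C T E)"
        using st aV unfolding M_def K1_def by blast
      moreover have "(\<exists>C\<in>{C. C \<subseteq> {0..<n} - {a} \<and> 2 \<le> card C \<and> 2 * card C \<le> n - 1}.
            \<exists>T\<in>{T. T \<subseteq> pairs_in C \<and> card T = card C - 1}. evKk n a C T E) \<Longrightarrow> KK E"
        unfolding KK_def using aV by blast
      ultimately show ?thesis by blast
    qed
  qed
  also have "\<dots> \<le> mu p (all_pairs n) M + (mu p (all_pairs n) K1 + mu p (all_pairs n) KK)"
    using mu_disj_le[OF p0 p1, of "all_pairs n" M "\<lambda>E. K1 E \<or> KK E"]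
      mu_disj_le[OF p0 p1, of "all_pairs n" K1 KK] by simp
  also have "mu p (all_pairs n) M \<le> real n * ((1 - p) ^ (n - 1) + real n * (p * (1 - p) ^ (n - 2)))"
    unfolding M_def
  proof (rule mu_ex_nat)
    fix v assume v: "v \<in> ?V"
    have "mu p (all_pairs n) (\<lambda>E. evM0 n v E \<or> (\<exists>u\<in>?V. u \<noteq> v \<and> evM1 n v u E)) \<le>
          mu p (all_pairs n) (evM0 n v) + mu p (all_pairs n) (\<lambda>E. \<exists>u\<in>?V. u \<noteq> v \<and> evM1 n v u E)"
      by (rule mu_disj_le[OF p0 p1])
    also have "mu p (all_pairs n) (evM0 n v) = (1 - p) ^ (n - 1)" using mu_evM0[OF p0 p1] v by simp
    also have "mu p (all_pairs n) (\<lambda>E. \<exists>u\<in>?V. u \<noteq> v \<and> evM1 n v u E) \<le> real n * (p * (1 - p) ^ (n - 2))"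
    proof (rule mu_ex_nat)
      fix u assume "u \<in> ?V"
      then show "mu p (all_pairs n) (\<lambda>E. u \<noteq> v \<and> evM1 n v u E) \<le> p * (1 - p) ^ (n - 2)"
        using mu_evM1[OF p0 p1, of v n u] v p0 p1 by (auto simp: mu_conj_const[OF p0 p1])
    qed
    finally show "mu p (all_pairs n) (\<lambda>E. evM0 n v E \<or> (\<exists>u\<in>?V. u \<noteq> v \<and> evM1 n v u E))
        \<le> (1 - p) ^ (n - 1) + real n * (p * (1 - p) ^ (n - 2))" by simp
  qed
  also have "mu p (all_pairs n) K1 \<le> real n ^ 4 * (p ^ 4 * (1 - p) * (1 - p * (1 - p)) ^ (n - 4))"
  proof -
    let ?v = "p ^ 4 * (1 - p) * (1 - p * (1 - p)) ^ (n - 4)"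
    have v0: "0 \<le> ?v"
    proof -
      have "p * (1 - p) \<le> 1" using p0 p1 by (simp add: mult_le_one)
      then show ?thesis using p0 p1 by simp
    qed
    have "mu p (all_pairs n) K1 \<le> real n * (real n * (real n * (real n * ?v)))"
      unfolding K1_def
    proof (intro mu_ex_nat)
      fix a v u1 u2 assume "a \<in> ?V" "v \<in> ?V" "u1 \<in> ?V" "u2 \<in> ?V"
      then show "mu p (all_pairs n) (\<lambda>E. distinct [a, v, u1, u2] \<and> evK1 n a v u1 u2 E) \<le> ?v"
        using mu_evK1[OF p0 p1, of a n v u1 u2] v0 by (auto simp: mu_conj_const[OF p0 p1])
    qed
    then show ?thesis by (simp add: mult.assoc eval_nat_numeral)
  qed
  also have "mu p (all_pairs n) KK \<le> real n * (\<Sum>k\<in>?K. Kterm n p k)"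
    unfolding KK_def
  proof (rule mu_ex_nat)
    fix a assume aV: "a \<in> ?V"
    have fK: "finite ?K" by (rule finite_subset[of _ "{..n}"]) auto
    have "mu p (all_pairs n) (\<lambda>E. \<exists>k\<in>?K. \<exists>C\<in>{C. C \<subseteq> ?V - {a} \<and> card C = k}.
          \<exists>T\<in>{T. T \<subseteq> pairs_in C \<and> card T = card C - 1}. evKk n a C T E)
        \<le> (\<Sum>k\<in>?K. mu p (all_pairs n) (\<lambda>E. \<exists>C\<in>{C. C \<subseteq> ?V - {a} \<and> card C = k}.
          \<exists>T\<in>{T. T \<subseteq> pairs_in C \<and> card T = card C - 1}. evKk n a C T E))"
      by (rule mu_ex_le[OF p0 p1 fK])
    also have "\<dots> \<le> (\<Sum>k\<in>?K. Kterm n p k)"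
    proof (rule sum_mono)
      fix k assume "k \<in> ?K"
      have fC: "finite {C. C \<subseteq> ?V - {a} \<and> card C = k}" by simp
      have cC: "card {C. C \<subseteq> ?V - {a} \<and> card C = k} = (n - 1) choose k"
        using n_subsets[of "?V - {a}" k] aV by simp
      show "mu p (all_pairs n) (\<lambda>E. \<exists>C\<in>{C. C \<subseteq> ?V - {a} \<and> card C = k}.
          \<exists>T\<in>{T. T \<subseteq> pairs_in C \<and> card T = card C - 1}. evKk n a C T E) \<le> Kterm n p k"
        unfolding Kterm_def
        using mu_ex_le_bound[OF p0 p1 fC, of "all_pairs n"] C_bound[of a n _ k] aV cC
        by (simp add: mult.assoc)
    qed
    finally show "mu p (all_pairs n) (\<lambda>E. \<exists>k\<in>?K. \<exists>C\<in>{C. C \<subseteq> ?V - {a} \<and> card C = k}.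
          \<exists>T\<in>{T. T \<subseteq> pairs_in C \<and> card T = card C - 1}. evKk n a C T E) \<le> (\<Sum>k\<in>?K. Kterm n p k)" .
  qed
  finally show ?thesis by simp
qed

end


lemma one_minus_pow_exp:
  fixes x :: real
  assumes "0 \<le> x" "x \<le> 1"
  shows "(1 - x) ^ m \<le> exp (- x * real m)"
proof -
  have "(1 - x) ^ m \<le> exp (- x) ^ m"
    using assms by (intro power_mono) (auto simp: exp_ge_add_one_self[of "-x", simplified])
  also have "\<dots> = exp (- x * real m)" using exp_of_nat_mult[of m "-x"] by (simp add: mult.commute)
  finally show ?thesis .
qed

lemma pow_exp_mono:
  fixes t t0 c :: real
  assumes "t0 \<le> t" "0 < t0" "0 < c" "real k \<le> c * t0"
  shows "t ^ k * exp (- c * t) \<le> t0 ^ k * exp (- c * t0)"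
proof -
  have t: "0 < t" using assms by simp
  have "t / t0 \<le> exp (t / t0 - 1)" using exp_ge_add_one_self[of "t / t0 - 1"] by simp
  then have "(t / t0) ^ k \<le> exp (t / t0 - 1) ^ k" using assms t by (intro power_mono) auto
  also have "\<dots> = exp (real k * (t / t0 - 1))" by (simp add: exp_of_nat_mult)
  also have "real k * (t / t0 - 1) = real k / t0 * (t - t0)" using assms by (simp add: field_simps)
  also have "\<dots> \<le> c * (t - t0)"
  proof (rule mult_right_mono)
    show "real k / t0 \<le> c" using assms by (simp add: divide_le_eq mult.commute)
  qed (use assms in simp)
  finally have "(t / t0) ^ k \<le> exp (c * (t - t0))" by simp
  then have "t ^ k \<le> t0 ^ k * exp (c * (t - t0))"
    using assms by (simp add: power_divide divide_le_eq mult.commute)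
  then have "t ^ k * exp (- c * t) \<le> t0 ^ k * exp (c * (t - t0)) * exp (- c * t)"
    by (intro mult_right_mono) auto
  also have "\<dots> = t0 ^ k * exp (- c * t0)" by (simp add: mult.assoc exp_add[symmetric] algebra_simps)
  finally show ?thesis .
qed

lemma pow_quad_bound:
  fixes p :: real
  assumes "0 \<le> p" "p \<le> 1"
  shows "(1 - p) ^ k \<le> 1 - real k * p + (real k * p) ^ 2 / 2"
proof (induction k)
  case 0
  then show ?case by simp
next
  case (Suc k)
  have "(1 - p) ^ Suc k = (1 - p) * (1 - p) ^ k" by simp
  also have "\<dots> \<le> (1 - p) * (1 - real k * p + (real k * p) ^ 2 / 2)"
    using Suc assms by (intro mult_left_mono) auto
  also have "\<dots> \<le> 1 - real (Suc k) * p + (real (Suc k) * p) ^ 2 / 2"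
  proof -
    have "0 \<le> (real k)^2 * p ^ 3" using assms by simp
    then show ?thesis by (simp add: algebra_simps power2_eq_square power3_eq_cube)
  qed
  finally show ?case .
qed

lemma kk_fact: "real k ^ k \<le> exp (real k) * fact k"
proof (induction k)
  case 0
  then show ?case by simp
next
  case (Suc k)
  show ?case
  proof (cases "k = 0")
    case True
    then show ?thesis by (simp add: exp_ge_add_one_self[of 1, simplified])
  next
    case False
    then have k0: "0 < real k" by simp
    have "(1 + 1 / real k) ^ k \<le> exp (1 / real k) ^ k"
      using k0 by (intro power_mono) (auto simp: exp_ge_add_one_self[of "1 / real k", simplified add.commute])
    also have "\<dots> = exp 1" using exp_of_nat_mult[of k "1 / real k"] k0 by simp
    finally have a: "(1 + 1 / real k) ^ k \<le> exp 1" .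
    have "real (Suc k) ^ k = real k ^ k * (1 + 1 / real k) ^ k"
      using k0 by (simp add: power_mult_distrib[symmetric] field_simps)
    also have "\<dots> \<le> exp (real k) * fact k * exp 1"
      using Suc a by (intro mult_mono) auto
    finally have b: "real (Suc k) ^ k \<le> exp (real k) * fact k * exp 1" .
    have "real (Suc k) ^ Suc k = real (Suc k) * real (Suc k) ^ k" by simp
    also have "\<dots> \<le> real (Suc k) * (exp (real k) * fact k * exp 1)"
      using b by (intro mult_left_mono) auto
    also have "\<dots> = exp (real (Suc k)) * fact (Suc k)"
      by (simp add: exp_add[symmetric] algebra_simps)
    finally show ?thesis .
  qed
qed


lemma tree_count_bound:
  assumes "1 \<le> k"
  shows "real ((k * k) ^ (k - 1)) / fact (k - 1) / fact k \<le> exp (2 * real k)"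
proof -
  obtain j where kj: "k = Suc j" using assms by (cases k) auto
  define K where "K = real k"
  define F' where "F' = (fact j :: real)"
  have F: "(fact k :: real) = K * F'" unfolding K_def F'_def kj by simp
  have K0: "0 < K" unfolding K_def kj by simp
  have F0: "0 < F'" unfolding F'_def by simp
  have e0: "real ((k * k) ^ (k - 1)) = (K * K) ^ j"
    unfolding K_def kj diff_Suc_1 by (simp only: of_nat_power of_nat_mult)
  have e1: "real ((k * k) ^ (k - 1)) = K ^ (2 * j)"
    unfolding e0 by (simp add: power_mult power2_eq_square)
  have "real ((k * k) ^ (k - 1)) / fact (k - 1) / fact k = K ^ (2 * j) / (F' * (K * F'))"
    unfolding e1 F using kj F'_def by simp
  also have "\<dots> = K ^ (2 * j) * K / ((K * F') * (K * F'))" using K0 F0 by (simp add: field_simps)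
  also have "\<dots> \<le> K ^ (2 * j) * K * K / ((K * F') * (K * F'))"
  proof (rule divide_right_mono)
    have "1 \<le> K" unfolding K_def kj by simp
    moreover have "0 \<le> K ^ (2 * j) * K" using K0 by simp
    ultimately show "K ^ (2 * j) * K \<le> K ^ (2 * j) * K * K" using mult_left_mono[of 1 K "K ^ (2 * j) * K"] by simp
  qed (use K0 F0 in simp)
  also have "\<dots> = (K ^ k / fact k) ^ 2"
  proof -
    have "K ^ (2 * j) = K ^ j * K ^ j" by (simp add: mult_2 power_add)
    then have "K ^ (2 * j) * K * K = K ^ k * K ^ k" unfolding kj by (simp add: ac_simps)
    then show ?thesis unfolding F by (simp add: power2_eq_square)
  qed
  also have "\<dots> \<le> exp (real k) ^ 2"
  proof (rule power_mono)
    show "K ^ k / fact k \<le> exp (real k)" using kk_fact[of k] unfolding K_def by (simp add: divide_le_eq)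
  qed (use K0 in simp)
  also have "\<dots> = exp (2 * real k)" by (simp add: exp_of_nat_mult[symmetric] mult.commute)
  finally show ?thesis .
qed


lemma KtermA:
  assumes p: "0 < p" "p \<le> 1" and k: "1 \<le> k"
  shows "real n * Kterm n p k \<le> real n / p * (exp 2 * (real n * p)) ^ k * (p + (1 - p) ^ (k + 1)) ^ (n - 1 - k)"
proof -
  define R where "R = (p + (1 - p) ^ (k + 1)) ^ (n - 1 - k)"
  define A where "A = real ((k * k) ^ (k - 1)) / fact (k - 1) * p ^ (k - 1)"
  define C where "C = real ((n - 1) choose k)"
  have R0: "0 \<le> R" unfolding R_def using p by simp
  have A0: "0 \<le> A" unfolding A_def using p by simp
  have C0: "0 \<le> C" unfolding C_def by simp
  have s1: "Kterm n p k \<le> C * A * R"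
  proof -
    have "Kterm n p k = C * min A 1 * ((1 - p) ^ k * R)" unfolding Kterm_def A_def C_def R_def by simp
    moreover have "min A 1 * ((1 - p) ^ k * R) \<le> A * (1 * R)"
      using p R0 A0 by (intro mult_mono) (auto simp: power_le_one)
    ultimately show ?thesis using C0 by (simp add: mult.assoc mult_left_mono)
  qed
  have s2: "C \<le> real n ^ k / fact k"
  proof -
    have "((n - 1) choose k) * fact k \<le> (n - 1) ^ k" by (rule binomial_fact_pow)
    also have "\<dots> \<le> n ^ k" by (intro power_mono) auto
    finally have "real ((n - 1) choose k) * fact k \<le> real n ^ k"
      by (metis of_nat_fact of_nat_le_iff of_nat_mult of_nat_power)
    then show ?thesis unfolding C_def by (simp add: field_simps)
  qed
  have s3: "real n ^ k / fact k * A \<le> real n ^ k * p ^ (k - 1) * exp (2 * real k)"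
  proof -
    have "real n ^ k / fact k * A = real n ^ k * p ^ (k - 1) * (real ((k * k) ^ (k - 1)) / fact (k - 1) / fact k)"
      unfolding A_def by (simp add: field_simps)
    also have "\<dots> \<le> real n ^ k * p ^ (k - 1) * exp (2 * real k)"
      using tree_count_bound[OF k] p by (intro mult_left_mono) auto
    finally show ?thesis .
  qed
  have s4: "real n ^ k * p ^ (k - 1) * exp (2 * real k) = (exp 2 * (real n * p)) ^ k / p"
  proof -
    have "p ^ (k - 1) = p ^ k / p" using p k by (simp add: power_eq_if)
    moreover have "exp (2 * real k) = exp 2 ^ k" by (simp add: exp_of_nat_mult[symmetric] mult.commute)
    ultimately show ?thesis by (simp add: power_mult_distrib)
  qed
  have "C * A * R \<le> real n ^ k / fact k * A * R" using s2 A0 R0 by (intro mult_right_mono) auto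
  also have "\<dots> \<le> (exp 2 * (real n * p)) ^ k / p * R" using s3 s4 R0 by (intro mult_right_mono) auto
  finally have "Kterm n p k \<le> (exp 2 * (real n * p)) ^ k / p * R" using s1 by linarith
  then have "real n * Kterm n p k \<le> real n * ((exp 2 * (real n * p)) ^ k / p * R)"
    by (intro mult_left_mono) auto
  then show ?thesis unfolding R_def by (simp add: field_simps)
qed

lemma KtermB:
  assumes p: "0 \<le> p" "p \<le> 1"
  shows "real n * Kterm n p k \<le> real n * 2 ^ (n - 1) * (p + (1 - p) ^ (k + 1)) ^ (n - 1 - k)"
proof -
  define R where "R = (p + (1 - p) ^ (k + 1)) ^ (n - 1 - k)"
  define A where "A = real ((k * k) ^ (k - 1)) / fact (k - 1) * p ^ (k - 1)"
  define C where "C = real ((n - 1) choose k)"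
  have R0: "0 \<le> R" unfolding R_def using p by simp
  have A0: "0 \<le> A" unfolding A_def using p by simp
  have C0: "0 \<le> C" unfolding C_def by simp
  have C2: "C \<le> 2 ^ (n - 1)" unfolding C_def using binomial_le_pow2[of "n - 1" k]
    by (metis of_nat_le_iff of_nat_numeral of_nat_power)
  have "Kterm n p k = C * min A 1 * ((1 - p) ^ k * R)" unfolding Kterm_def A_def C_def R_def by simp
  also have "\<dots> \<le> 2 ^ (n - 1) * 1 * (1 * R)"
    using p R0 A0 C0 C2 by (intro mult_mono) (auto simp: power_le_one)
  finally have K: "Kterm n p k \<le> 2 ^ (n - 1) * R" by simp
  show ?thesis using mult_left_mono[OF K, of "real n"] unfolding R_def by (simp add: mult.assoc)
qed

lemma R_exp:
  assumes p: "0 \<le> p" "p \<le> 1"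
  shows "(p + (1 - p) ^ (k + 1)) ^ m \<le> exp (- ((1 - p) * (1 - (1 - p) ^ k)) * real m)"
proof -
  have e: "p + (1 - p) ^ (k + 1) = 1 - (1 - p) * (1 - (1 - p) ^ k)" by (simp add: algebra_simps)
  have pk1: "(1 - p) ^ k \<le> 1" by (rule power_le_one) (use p in auto)
  have pk0: "0 \<le> (1 - p) ^ k" using p by simp
  have x0: "0 \<le> (1 - p) * (1 - (1 - p) ^ k)" using p pk1 by simp
  have x1: "(1 - p) * (1 - (1 - p) ^ k) \<le> 1"
  proof -
    have "(1 - p) * (1 - (1 - p) ^ k) \<le> 1 * 1" using p pk0 pk1 by (intro mult_mono) auto
    then show ?thesis by simp
  qed
  show ?thesis unfolding e by (rule one_minus_pow_exp[OF x0 x1])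
qed


lemma S_M:
  assumes n2: "2 \<le> n" and p: "0 < p" "p \<le> 1" and L: "0 < L"
    and t0: "1 \<le> t0" "t0 \<le> real n * p" "t0 \<le> 2 * L"
    and et0: "exp (- t0) = 1 / (real n * L * exp w)"
  shows "real n * ((1 - p) ^ (n - 1) + real n * (p * (1 - p) ^ (n - 2))) \<le> 4 * exp 2 * exp (- w)"
proof -
  define t where "t = real n * p"
  define Q where "Q = (1 - p) ^ (n - 2)"
  have Q0: "0 \<le> Q" unfolding Q_def using p by simp
  have a1: "(1 - p) ^ (n - 1) \<le> Q" unfolding Q_def using p n2 by (intro power_decreasing) auto
  have a2: "Q \<le> exp (- t) * exp 2"
  proof -
    have "Q \<le> exp (- p * real (n - 2))" unfolding Q_def using p by (intro one_minus_pow_exp) auto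
    also have "- p * real (n - 2) = - t + 2 * p" unfolding t_def using n2 by (simp add: of_nat_diff algebra_simps)
    also have "exp (- t + 2 * p) \<le> exp (- t + 2)" using p by simp
    finally have "Q \<le> exp (- t + 2)" .
    then show ?thesis using exp_add[of "- t" 2] by simp
  qed
  have t1: "1 \<le> t" using t0 unfolding t_def by simp
  have "real n * ((1 - p) ^ (n - 1) + real n * (p * Q)) \<le> real n * (Q + t * Q)"
    using a1 unfolding t_def by (intro mult_left_mono) (auto simp: algebra_simps)
  also have "\<dots> = real n * (1 + t) * Q" by (simp add: algebra_simps)
  also have "\<dots> \<le> real n * (2 * t) * (exp (- t) * exp 2)"
    using a2 t1 Q0 by (intro mult_mono) auto
  also have "\<dots> = 2 * exp 2 * real n * (t ^ 1 * exp (- 1 * t))" by simp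
  also have "\<dots> \<le> 2 * exp 2 * real n * (t0 ^ 1 * exp (- 1 * t0))"
    using pow_exp_mono[of t0 t 1 1] t0 unfolding t_def by (intro mult_left_mono) auto
  also have "\<dots> = 2 * exp 2 * t0 / (L * exp w)" using et0 n2 by (simp add: field_simps)
  also have "\<dots> \<le> 2 * exp 2 * (2 * L) / (L * exp w)" using t0 L by (intro divide_right_mono mult_left_mono) auto
  also have "\<dots> = 4 * exp 2 * exp (- w)" using L by (simp add: field_simps exp_minus)
  finally show ?thesis unfolding Q_def .
qed

lemma S_K1:
  assumes n4: "4 \<le> n" and p: "0 < p" "p \<le> 1 / 2" and L: "8 \<le> L" "L \<le> real n * p"
  shows "real n ^ 4 * (p ^ 4 * (1 - p) * (1 - p * (1 - p)) ^ (n - 4)) \<le> exp 2 * L ^ 4 * exp (- L / 2)"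
proof -
  define t where "t = real n * p"
  have x0: "0 \<le> p * (1 - p)" "p * (1 - p) \<le> 1" using p by (auto simp: mult_le_one)
  have "(1 - p * (1 - p)) ^ (n - 4) \<le> exp (- (p * (1 - p)) * real (n - 4))"
    by (rule one_minus_pow_exp[OF x0])
  also have "\<dots> \<le> exp (- t / 2 + 2)"
  proof -
    have pp: "p / 2 \<le> p * (1 - p)"
    proof -
      have "0 \<le> p * (1 / 2 - p)" using p by simp
      then show ?thesis by (simp add: algebra_simps)
    qed
    have A: "p * (1 - p) * real (n - 4) \<ge> p / 2 * real (n - 4)" using pp by (intro mult_right_mono) auto
    have B: "p / 2 * real (n - 4) = t / 2 - 2 * p" unfolding t_def using n4 by (simp add: of_nat_diff algebra_simps)
    have C: "- (p * (1 - p)) * real (n - 4) = - (p * (1 - p) * real (n - 4))" by simp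
    show ?thesis unfolding exp_le_cancel_iff using A B C p by linarith
  qed
  finally have e1: "(1 - p * (1 - p)) ^ (n - 4) \<le> exp (- t / 2 + 2)" .
  have "real n ^ 4 * (p ^ 4 * (1 - p) * (1 - p * (1 - p)) ^ (n - 4)) \<le> real n ^ 4 * (p ^ 4 * 1 * exp (- t / 2 + 2))"
    using p e1 x0 by (intro mult_left_mono mult_mono) auto
  also have "\<dots> = exp 2 * (t ^ 4 * exp (- (1/2) * t))"
  proof -
    have "exp (- t / 2 + 2) = exp 2 * exp (- (1/2) * t)" by (simp add: exp_add[symmetric] algebra_simps)
    then show ?thesis unfolding t_def by (simp add: power_mult_distrib algebra_simps)
  qed
  also have "\<dots> \<le> exp 2 * (L ^ 4 * exp (- (1/2) * L))"
    using pow_exp_mono[of L t "1/2" 4] L unfolding t_def by (intro mult_left_mono) auto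
  finally show ?thesis by simp
qed


lemma S_k:
  assumes n: "100 \<le> n" and p: "0 < p" "p \<le> real n powr (-1/3)" "real n powr (-1/3) \<le> 1/100"
    and L: "100 \<le> L" and t0: "L \<le> t0" "t0 \<le> real n * p" "t0 \<le> 2 * L"
    and et0: "exp (- t0) = 1 / (real n * L * exp w)" and w: "0 \<le> w"
    and dl: "\<delta> = real n powr (-1/3) + real n powr (1/6) * real n powr (-1/3) / 2 + (real n powr (1/6) + 1) / real n"
      "\<delta> \<le> 1/2" "2 * L * \<delta> \<le> 1"
    and s60: "60 \<le> real n powr (1/6)"
    and y: "y = exp 3 * L * exp (- L / 12)" "y \<le> 1"
    and k: "2 \<le> k" "2 * k \<le> n - 1"
  shows "real n * Kterm n p k \<le> (if k = 2 then 4 * exp 6 / L else 0) + 8 * exp 9 / (real n * L)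
          + real n ^ 2 / L * y ^ 60 + real n * (21 / 25) powr ((real n - 1) / 2)"
proof -
  define t where "t = real n * p"
  define q where "q = 1 - p"
  define R where "R = (p + (1 - p) ^ (k + 1)) ^ (n - 1 - k)"
  have p1: "p \<le> 1/100" using p by linarith
  have q12: "1/2 \<le> q" "q \<le> 1" unfolding q_def using p1 p by auto
  have L0: "0 < L" using L by simp
  have t_nn: "0 \<le> t" unfolding t_def using p by simp
  have n0: "0 < real n" using n by simp
  have y0: "0 \<le> y" unfolding y(1) using L by simp
  have kn: "k < n" using k by simp
  have rnk: "real (n - 1 - k) = real n - 1 - real k" using kn by (simp add: of_nat_diff)
  have k2r: "2 * real k \<le> real n - 1"
  proof -
    have "real (2 * k) \<le> real (n - 1)" using k(2) by (simp only: of_nat_le_iff)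
    then show ?thesis using n by (simp add: of_nat_diff)
  qed
  have npL: "real n / p \<le> real n ^ 2 / L"
  proof -
    have "L / real n \<le> p" using t0 n0 by (simp add: field_simps)
    then have "real n / p \<le> real n / (L / real n)" using L0 n0 p by (intro divide_left_mono) auto
    then show ?thesis using L0 n0 by (simp add: power2_eq_square field_simps)
  qed
  have T3: "0 \<le> real n * (21 / 25) powr ((real n - 1) / 2)" by simp
  have T2: "0 \<le> real n ^ 2 / L * y ^ 60" using L0 y0 by simp
  have T1: "0 \<le> 8 * exp 9 / (real n * L)" using L0 n0 by simp
  have T0: "0 \<le> (if k = 2 then 4 * exp 6 / L else 0)" using L0 by simp
  have Rexp: "R \<le> exp (- (q * (1 - q ^ k)) * real (n - 1 - k))" unfolding R_def q_def using p p1 by (intro R_exp) auto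
  have qk_exp: "q ^ k \<le> exp (- (real k * p))"
    using one_minus_pow_exp[of p k] p p1 unfolding q_def by (simp add: mult.commute)
  consider (a) "real k \<le> real n powr (1/6)" | (b) "real n powr (1/6) < real k" "real k * p \<le> 2" | (c) "2 < real k * p"
    by linarith
  then show ?thesis
  proof cases
    case a
    have KA: "real n * Kterm n p k \<le> real n / p * (exp 2 * t) ^ k * R"
      using KtermA[of p k n] p p1 k unfolding t_def R_def by simp
    have e1: "1 - q ^ k \<ge> real k * p * (1 - real k * p / 2)"
      using pow_quad_bound[of p k] p p1 unfolding q_def by (simp add: power2_eq_square algebra_simps)
    have e2: "q * (1 - q ^ k) \<ge> real k * p * (1 - p - real k * p / 2)"
    proof -
      have "q * (1 - q ^ k) \<ge> q * (real k * p * (1 - real k * p / 2))" using e1 q12 by (intro mult_left_mono) auto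
      moreover have "q * (real k * p * (1 - real k * p / 2)) - real k * p * (1 - p - real k * p / 2)
          = real k * p * (p * (real k * p / 2))" unfolding q_def by (simp add: field_simps)
      moreover have "0 \<le> real k * p * (p * (real k * p / 2))" using p by simp
      ultimately show ?thesis by linarith
    qed
    have kp: "real k * p \<le> real n powr (1/6) * real n powr (-1/3)"
      using a p by (intro mult_mono) auto
    have k1n: "(real k + 1) / real n \<le> (real n powr (1/6) + 1) / real n"
      using a n0 by (intro divide_right_mono) auto
    have aa: "1 - p - real k * p / 2 - (real k + 1) / real n \<ge> 1 - \<delta>"
      unfolding dl(1) using p kp k1n by linarith
    have e3: "(1 - p - real k * p / 2) * (real n - 1 - real k) \<ge> real n * (1 - \<delta>)"
    proof -
      have "(1 - p - real k * p / 2) * (real n - 1 - real k) =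
            real n * (1 - p - real k * p / 2 - (real k + 1) / real n) + (p + real k * p / 2) * (real k + 1)"
        using n0 by (simp add: field_simps)
      moreover have "0 \<le> (p + real k * p / 2) * (real k + 1)" using p by simp
      moreover have "real n * (1 - p - real k * p / 2 - (real k + 1) / real n) \<ge> real n * (1 - \<delta>)"
        using aa n0 by (intro mult_left_mono) auto
      ultimately show ?thesis by linarith
    qed
    have e4: "q * (1 - q ^ k) * real (n - 1 - k) \<ge> real k * t * (1 - \<delta>)"
    proof -
      have "q * (1 - q ^ k) * real (n - 1 - k) \<ge> real k * p * (1 - p - real k * p / 2) * real (n - 1 - k)"
        using e2 by (intro mult_right_mono) auto
      moreover have "real k * p * (1 - p - real k * p / 2) * real (n - 1 - k) \<ge> real k * p * (real n * (1 - \<delta>))"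
        using e3 p unfolding rnk by (simp add: mult.assoc mult_left_mono)
      ultimately show ?thesis unfolding t_def by (simp add: algebra_simps)
    qed
    have R1: "R \<le> exp (- (1 - \<delta>) * t) ^ k"
    proof -
      have "R \<le> exp (- (q * (1 - q ^ k)) * real (n - 1 - k))" by (rule Rexp)
      also have "\<dots> \<le> exp (- (real k * t * (1 - \<delta>)))" using e4 by simp
      also have "\<dots> = exp (- (1 - \<delta>) * t) ^ k" by (simp add: exp_of_nat_mult[symmetric] algebra_simps)
      finally show ?thesis .
    qed
    have tt: "t * exp (- (1 - \<delta>) * t) \<le> t0 * exp (- (1 - \<delta>) * t0)"
    proof -
      have c0: "0 < 1 - \<delta>" using dl(2) by simp
      have "(1/2) * 100 \<le> (1 - \<delta>) * t0" using dl(2) t0 L by (intro mult_mono) auto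
      then have c1: "real 1 \<le> (1 - \<delta>) * t0" by simp
      have "t0 \<le> t" "0 < t0" using t0 L unfolding t_def by auto
      from pow_exp_mono[OF this c0 c1] show ?thesis by simp
    qed
    have t0e: "t0 * exp (- (1 - \<delta>) * t0) \<le> 2 * exp 1 / real n"
    proof -
      have "t0 * exp (- (1 - \<delta>) * t0) = t0 * exp (- t0) * exp (\<delta> * t0)" by (simp add: exp_add[symmetric] algebra_simps)
      also have "\<dots> \<le> t0 * exp (- t0) * exp 1"
      proof -
        have "0 \<le> \<delta>" unfolding dl(1) by simp
        then have "\<delta> * t0 \<le> \<delta> * (2 * L)" using t0 by (intro mult_left_mono) auto
        then have "\<delta> * t0 \<le> 1" using dl by (simp add: algebra_simps)
        then show ?thesis using t0 L by (intro mult_left_mono) auto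
      qed
      also have "t0 * exp (- t0) = t0 / (real n * L * exp w)" using et0 by simp
      also have "\<dots> \<le> 2 * L / (real n * L * 1)"
        using t0 L w n0 by (intro frac_le mult_left_mono mult_pos_pos) auto
      also have "\<dots> = 2 / real n" using L0 by simp
      finally show ?thesis by (simp add: field_simps)
    qed
    define x where "x = 2 * exp 3 / real n"
    have x0: "0 \<le> x" unfolding x_def by simp
    have x1: "x \<le> 1"
    proof -
      have "exp (3::real) \<le> 50"
      proof -
        have "exp (1::real) \<le> 3" using exp_le by simp
        then have "exp (1::real) ^ 3 \<le> 3 ^ 3" by (intro power_mono) auto
        then show ?thesis by (simp add: exp_of_nat_mult[symmetric])
      qed
      then show ?thesis unfolding x_def using n by (simp add: field_simps)
    qed
    have base: "exp 2 * t * exp (- (1 - \<delta>) * t) \<le> x"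
    proof -
      have "exp 2 * t * exp (- (1 - \<delta>) * t) \<le> exp 2 * (2 * exp 1 / real n)"
      proof -
        have "t * exp (- (1 - \<delta>) * t) \<le> 2 * exp 1 / real n" using tt t0e by linarith
        then have "exp 2 * (t * exp (- (1 - \<delta>) * t)) \<le> exp 2 * (2 * exp 1 / real n)"
          by (intro mult_left_mono) auto
        then show ?thesis by (simp add: mult.assoc)
      qed
      also have "\<dots> = x" unfolding x_def by (simp add: exp_add[symmetric] field_simps)
      finally show ?thesis .
    qed
    have "real n * Kterm n p k \<le> real n / p * (exp 2 * t) ^ k * exp (- (1 - \<delta>) * t) ^ k"
      using KA R1 p t_nn by (elim order.trans) (intro mult_left_mono, auto)
    also have "\<dots> = real n / p * (exp 2 * t * exp (- (1 - \<delta>) * t)) ^ k" by (simp add: power_mult_distrib)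
    also have "\<dots> \<le> real n ^ 2 / L * x ^ k"
      using npL base p t0 L by (intro mult_mono power_mono) (auto simp: t_def)
    also have "\<dots> \<le> (if k = 2 then 4 * exp 6 / L else 0) + 8 * exp 9 / (real n * L)"
    proof (cases "k = 2")
      case True
      have eq: "real n ^ 2 / L * x ^ 2 = 4 * exp 6 / L" unfolding x_def using n0
        by (simp add: power2_eq_square field_simps exp_add[symmetric])
      have i: "(if k = 2 then 4 * exp 6 / L else 0) = 4 * exp 6 / L" using True by simp
      have eq2: "real n ^ 2 / L * x ^ k = 4 * exp 6 / L" using eq True by simp
      show ?thesis unfolding i eq2 using T1 by linarith
    next
      case False
      then have "x ^ k \<le> x ^ 3" using k x0 x1 by (intro power_decreasing) auto
      then have "real n ^ 2 / L * x ^ k \<le> real n ^ 2 / L * x ^ 3" using L0 by (intro mult_left_mono) auto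
      also have "\<dots> = 8 * exp 9 / (real n * L)" unfolding x_def using n0 L0
        by (simp add: power3_eq_cube power2_eq_square field_simps exp_add[symmetric])
      finally have "real n ^ 2 / L * x ^ k \<le> 8 * exp 9 / (real n * L)" .
      moreover have i: "(if k = 2 then 4 * exp 6 / L else 0) = 0" using False by simp
      ultimately show ?thesis unfolding i by simp
    qed
    finally show ?thesis using T2 T3 by linarith
  next
    case b
    have KA: "real n * Kterm n p k \<le> real n / p * (exp 2 * t) ^ k * R"
      using KtermA[of p k n] p p1 k unfolding t_def R_def by simp
    have f1: "1 - q ^ k \<ge> real k * p / 3"
    proof -
      have h: "exp (real k * p) \<ge> 1 + real k * p" by simp
      have hpos: "0 < 1 + real k * p" using p by (simp add: add_pos_nonneg)
      have "1 / exp (real k * p) \<le> 1 / (1 + real k * p)"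
      proof (rule divide_left_mono)
        have "0 < 1 + real k * p" using p by (simp add: add_pos_nonneg)
        then show "0 < exp (real k * p) * (1 + real k * p)" by simp
      qed (use h in auto)
      then have "exp (- (real k * p)) \<le> 1 / (1 + real k * p)" by (simp add: exp_minus')
      then have "1 - q ^ k \<ge> 1 - 1 / (1 + real k * p)" using qk_exp by linarith
      moreover have "1 - 1 / (1 + real k * p) = real k * p / (1 + real k * p)" using hpos
        by (simp add: field_simps)
      moreover have "real k * p / (1 + real k * p) \<ge> real k * p / 3" using b p hpos
        by (intro divide_left_mono) (auto simp: mult_pos_pos)
      ultimately show ?thesis by linarith
    qed
    have f2: "q * (1 - q ^ k) \<ge> real k * p / 6"
    proof -
      have "q * (1 - q ^ k) \<ge> (1/2) * (real k * p / 3)" using f1 q12 p by (intro mult_mono) auto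
      then show ?thesis by simp
    qed
      have f3: "real (n - 1 - k) \<ge> (real n - 1) / 2" unfolding rnk using k2r by (simp add: field_simps)
    have f4: "q * (1 - q ^ k) * real (n - 1 - k) \<ge> real k * ((t - 1) / 12)"
    proof -
      have "q * (1 - q ^ k) * real (n - 1 - k) \<ge> real k * p / 6 * ((real n - 1) / 2)"
      proof (rule mult_mono)
        have "0 \<le> real k * p" using p by simp
        then show "0 \<le> q * (1 - q ^ k)" using f2 by linarith
      qed (use f2 f3 n in auto)
      moreover have "real k * p / 6 * ((real n - 1) / 2) = real k * ((t - p) / 12)" unfolding t_def by (simp add: algebra_simps)
      moreover have "real k * ((t - p) / 12) \<ge> real k * ((t - 1) / 12)" using p1 by (intro mult_left_mono) auto
      ultimately show ?thesis by linarith
    qed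
    have R1: "R \<le> exp (- ((t - 1) / 12)) ^ k"
    proof -
      have "R \<le> exp (- (q * (1 - q ^ k)) * real (n - 1 - k))" by (rule Rexp)
      also have "\<dots> \<le> exp (- (real k * ((t - 1) / 12)))" using f4 by simp
      also have "\<dots> = exp (- ((t - 1) / 12)) ^ k" by (simp add: exp_of_nat_mult[symmetric] algebra_simps)
      finally show ?thesis .
    qed
    have tt: "t * exp (- (1/12) * t) \<le> L * exp (- (1/12) * L)"
      using pow_exp_mono[of L t "1/12" 1] t0 L unfolding t_def by auto
    have base: "exp 2 * t * exp (- ((t - 1) / 12)) \<le> y"
    proof -
      have "exp 2 * t * exp (- ((t - 1) / 12)) = exp 2 * exp (1/12) * (t * exp (- (1/12) * t))"
        by (simp add: exp_add[symmetric] algebra_simps diff_divide_distrib)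
      also have "\<dots> \<le> exp 2 * exp (1/12) * (L * exp (- (1/12) * L))"
        using tt by (intro mult_left_mono) auto
      also have "\<dots> \<le> exp 3 * (L * exp (- (1/12) * L))"
      proof -
        have "exp 2 * exp (1/12) = exp (2 + 1/12 :: real)" by (simp only: exp_add)
        also have "\<dots> \<le> exp 3" by simp
        finally show ?thesis using L by (intro mult_right_mono) auto
      qed
      finally show ?thesis unfolding y(1) by (simp add: algebra_simps)
    qed
    have b0: "0 \<le> exp 2 * t * exp (- ((t - 1) / 12))" unfolding t_def using p by simp
    have k60: "60 \<le> k" using b s60 by linarith
    have "real n * Kterm n p k \<le> real n / p * (exp 2 * t) ^ k * exp (- ((t - 1) / 12)) ^ k"
      using KA R1 p t_nn by (elim order.trans) (intro mult_left_mono, auto)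
    also have "\<dots> = real n / p * (exp 2 * t * exp (- ((t - 1) / 12))) ^ k" by (simp add: power_mult_distrib)
    also have "\<dots> \<le> real n ^ 2 / L * y ^ k"
      using npL base b0 p t0 L by (intro mult_mono power_mono) (auto simp: t_def)
    also have "\<dots> \<le> real n ^ 2 / L * y ^ 60"
      using k60 y0 y L0 by (intro mult_left_mono power_decreasing) auto
    finally show ?thesis using T0 T1 T3 by linarith
  next
    case c
    have KB: "real n * Kterm n p k \<le> real n * 2 ^ (n - 1) * R"
      using KtermB[of p n k] p p1 unfolding R_def by simp
    have e2: "exp (- 2 :: real) \<le> 1 / 5"
    proof -
      have "(5::real) \<le> exp 2" using exp_lower_Taylor_quadratic[of 2] by simp
      then show ?thesis by (simp add: exp_minus field_simps)
    qed
    have g1: "(1 - p) ^ (k + 1) \<le> 1 / 5"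
    proof -
      have "(1 - p) ^ (k + 1) \<le> (1 - p) ^ k" using p p1 by (intro power_decreasing) auto
      also have "\<dots> \<le> exp (- (real k * p))" using qk_exp unfolding q_def .
      also have "\<dots> \<le> exp (- 2)" using c by simp
      finally show ?thesis using e2 by linarith
    qed
    have g2: "p + (1 - p) ^ (k + 1) \<le> 21 / 100" using g1 p1 by linarith
    have g0: "0 \<le> p + (1 - p) ^ (k + 1)" using p p1 by simp
    define z where "z = (real n - 1) / 2"
    have R1: "R \<le> (21 / 100) powr z"
    proof -
      have "R \<le> (21 / 100) ^ (n - 1 - k)" unfolding R_def using g0 g2 by (intro power_mono) auto
      also have "\<dots> = (21 / 100) powr real (n - 1 - k)" by (simp add: powr_realpow)
      also have "\<dots> \<le> (21 / 100) powr z"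
      proof (rule powr_mono')
        show "z \<le> real (n - 1 - k)" unfolding z_def rnk using k2r by (simp add: field_simps)
      qed auto
      finally show ?thesis .
    qed
    have p2: "(2::real) ^ (n - 1) = 4 powr z"
    proof -
      have "(2::real) ^ (n - 1) = 2 powr real (n - 1)" by (simp add: powr_realpow)
      also have "\<dots> = (2 powr 2) powr z" unfolding z_def using n by (simp add: powr_powr of_nat_diff)
      also have "(2::real) powr 2 = 4" by simp
      finally show ?thesis .
    qed
    have "real n * Kterm n p k \<le> real n * 2 ^ (n - 1) * (21 / 100) powr z"
      using KB R1 by (elim order.trans) (intro mult_left_mono, auto)
    also have "\<dots> = real n * (4 * (21 / 100)) powr z" unfolding p2 using powr_mult[of 4 "21/100" z] by simp
    also have "(4 * (21 / 100) :: real) = 21 / 25" by simp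
    finally show ?thesis unfolding z_def using T0 T1 T2 by linarith
  qed
qed


definition FS :: "nat \<Rightarrow> real \<Rightarrow> real" where
  "FS n w = 4 * exp 2 * exp (- w) + exp 2 * ln (real n) ^ 4 * exp (- ln (real n) / 2)
     + 4 * exp 6 / ln (real n) + 8 * exp 9 / ln (real n)
     + real n ^ 3 / ln (real n) * (exp 3 * ln (real n) * exp (- ln (real n) / 12)) ^ 60
     + real n ^ 2 * (21 / 25) powr ((real n - 1) / 2)"

definition dlt :: "nat \<Rightarrow> real" where
  "dlt n = real n powr (-1/3) + real n powr (1/6) * real n powr (-1/3) / 2 + (real n powr (1/6) + 1) / real n"

lemma sparse_final:
  assumes n: "100 \<le> n" and L: "100 \<le> ln (real n)"
    and w: "0 \<le> w" "w \<le> ln (ln (real n))" and LL: "ln (ln (real n)) \<le> ln (real n) / 2"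
    and p: "(ln (real n) + ln (ln (real n)) + w) / real n \<le> p" "p \<le> real n powr (-1/3)"
    and s: "real n powr (-1/3) \<le> 1/100"
    and d: "dlt n \<le> 1/2" "2 * ln (real n) * dlt n \<le> 1"
    and s60: "60 \<le> real n powr (1/6)"
    and y: "exp 3 * ln (real n) * exp (- ln (real n) / 12) \<le> 1"
  shows "gnp_prob n p (\<lambda>E. \<exists>a. star_cut_vertex n E a) \<le> FS n w"
proof -
  define L where "L = ln (real n)"
  define t0 where "t0 = L + ln L + w"
  define yy where "yy = exp 3 * L * exp (- L / 12)"
  have n0: "0 < real n" using n by simp
  have L0: "0 < L" using L unfolding L_def by simp
  have lnL: "0 \<le> ln L" using L unfolding L_def by simp
  have t0L: "L \<le> t0" "t0 \<le> 2 * L" unfolding t0_def using lnL w LL unfolding L_def by auto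
  have t0p: "t0 \<le> real n * p" using p(1) n0 unfolding t0_def L_def by (simp add: field_simps)
  have pp: "0 < p"
  proof -
    have "0 < t0" using t0L L0 by simp
    then have "0 < t0 / real n" using n0 by simp
    then show ?thesis using p(1) unfolding t0_def L_def by simp
  qed
  have p1: "p \<le> 1/100" using p s by linarith
  have et0: "exp (- t0) = 1 / (real n * L * exp w)"
  proof -
    have "exp (- t0) = exp (- ln (real n)) * exp (- ln L) * exp (- w)"
      unfolding t0_def L_def by (simp add: exp_add[symmetric])
    also have "\<dots> = 1 / (real n * L * exp w)" using n0 L0 unfolding L_def by (simp add: exp_minus field_simps)
    finally show ?thesis .
  qed
  have M: "real n * ((1 - p) ^ (n - 1) + real n * (p * (1 - p) ^ (n - 2))) \<le> 4 * exp 2 * exp (- w)"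
    by (rule S_M[OF _ pp _ L0 _ t0p _ et0]) (use n p1 t0L L in \<open>auto simp: L_def\<close>)
  have K1: "real n ^ 4 * (p ^ 4 * (1 - p) * (1 - p * (1 - p)) ^ (n - 4)) \<le> exp 2 * L ^ 4 * exp (- L / 2)"
    by (rule S_K1) (use n pp p1 L t0L t0p in \<open>auto simp: L_def\<close>)
  define K where "K = {k. 2 \<le> k \<and> 2 * k \<le> n - 1}"
  define c where "c = 8 * exp 9 / (real n * L) + real n ^ 2 / L * yy ^ 60 + real n * (21 / 25) powr ((real n - 1) / 2)"
  have c0: "0 \<le> c" unfolding c_def yy_def using L0 by simp
  have fK: "finite K" unfolding K_def by (rule finite_subset[of _ "{..n}"]) auto
  have cK: "card K \<le> n"
  proof -
    have "K \<subseteq> {..<n}" unfolding K_def by auto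
    then show ?thesis using card_mono[of "{..<n}" K] by simp
  qed
  have "real n * (\<Sum>k\<in>K. Kterm n p k) = (\<Sum>k\<in>K. real n * Kterm n p k)" by (simp add: sum_distrib_left)
  also have "\<dots> \<le> (\<Sum>k\<in>K. (if k = 2 then 4 * exp 6 / L else 0) + c)"
  proof (rule sum_mono)
    fix k assume "k \<in> K"
    then have k: "2 \<le> k" "2 * k \<le> n - 1" unfolding K_def by auto
    have "real n * Kterm n p k \<le> (if k = 2 then 4 * exp 6 / L else 0) + 8 * exp 9 / (real n * L)
          + real n ^ 2 / L * yy ^ 60 + real n * (21 / 25) powr ((real n - 1) / 2)"
    proof (rule S_k[of n p L t0 w "dlt n" yy k])
      show "dlt n \<le> 1/2" by (rule d(1))
      show "2 * L * dlt n \<le> 1" using d(2) unfolding L_def .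
      show "yy \<le> 1" using y unfolding yy_def L_def .
    qed (use n pp p(2) s L t0L t0p et0 w s60 k in \<open>auto simp: dlt_def yy_def L_def\<close>)
    then show "real n * Kterm n p k \<le> (if k = 2 then 4 * exp 6 / L else 0) + c"
      unfolding c_def by (simp add: add.assoc)
  qed
  also have "\<dots> = (\<Sum>k\<in>K. (if k = 2 then 4 * exp 6 / L else 0)) + real (card K) * c"
    by (simp add: sum.distrib)
  also have "(\<Sum>k\<in>K. (if k = 2 then 4 * exp 6 / L else 0)) \<le> 4 * exp 6 / L"
    using sum.delta[OF fK, of 2 "\<lambda>_. 4 * exp 6 / L"] L0 by simp
  also have "real (card K) * c \<le> real n * c" using cK c0 by (intro mult_right_mono) auto
  finally have KK: "real n * (\<Sum>k\<in>K. Kterm n p k) \<le> 4 * exp 6 / L + real n * c" by simp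
  have "gnp_prob n p (\<lambda>E. \<exists>a. star_cut_vertex n E a) \<le>
     real n * ((1 - p) ^ (n - 1) + real n * (p * (1 - p) ^ (n - 2)))
   + real n ^ 4 * (p ^ 4 * (1 - p) * (1 - p * (1 - p)) ^ (n - 4))
   + real n * (\<Sum>k\<in>K. Kterm n p k)"
    unfolding K_def using union_sparse[of p n] pp p1 by simp
  also have "\<dots> \<le> 4 * exp 2 * exp (- w) + exp 2 * L ^ 4 * exp (- L / 2) + (4 * exp 6 / L + real n * c)"
    using M K1 KK by linarith
  also have "\<dots> = FS n w"
    unfolding FS_def c_def yy_def L_def using n0 L0[unfolded L_def]
    by (simp add: field_simps power2_eq_square power3_eq_cube)
  finally show ?thesis .
qed


lemma pow8_exp: "0 \<le> s \<Longrightarrow> s ^ 8 * exp (- s / 4) \<le> (32::real) ^ 8"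
proof -
  assume s: "0 \<le> s"
  have "s / 32 \<le> exp (s / 32)" using exp_ge_add_one_self[of "s / 32"] by linarith
  then have "(s / 32) ^ 8 \<le> exp (s / 32) ^ 8" using s by (intro power_mono) auto
  also have "\<dots> = exp (s / 4)" by (simp add: exp_of_nat_mult[symmetric])
  finally have "s ^ 8 \<le> 32 ^ 8 * exp (s / 4)" by (simp add: power_divide field_simps)
  then have "s ^ 8 * exp (- s / 4) \<le> 32 ^ 8 * exp (s / 4) * exp (- s / 4)" by (intro mult_right_mono) auto
  also have "\<dots> = 32 ^ 8" by (simp add: mult.assoc exp_add[symmetric])
  finally show ?thesis .
qed

lemma pow3_exp: "0 \<le> s \<Longrightarrow> s ^ 3 * exp (- s / 4) \<le> min (s ^ 3) ((16::real) ^ 4 / s)"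
proof -
  assume s: "0 \<le> s"
  have a: "s ^ 3 * exp (- s / 4) \<le> s ^ 3"
    using mult_left_mono[of "exp (- s / 4)" 1 "s ^ 3"] s by simp
  have b: "s ^ 3 * exp (- s / 4) \<le> 16 ^ 4 / s"
  proof (cases "s = 0")
    case True
    then show ?thesis by simp
  next
    case False
    then have s0: "0 < s" using s by simp
    have "s / 16 \<le> exp (s / 16)" using exp_ge_add_one_self[of "s / 16"] by linarith
    then have "(s / 16) ^ 4 \<le> exp (s / 16) ^ 4" using s by (intro power_mono) auto
    also have "\<dots> = exp (s / 4)" by (simp add: exp_of_nat_mult[symmetric])
    finally have "s ^ 4 \<le> 16 ^ 4 * exp (s / 4)" by (simp add: power_divide field_simps)
    then have "s ^ 4 * exp (- s / 4) \<le> 16 ^ 4 * exp (s / 4) * exp (- s / 4)" by (intro mult_right_mono) auto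
    also have "\<dots> = 16 ^ 4" by (simp add: mult.assoc exp_add[symmetric])
    finally have "s * (s ^ 3 * exp (- s / 4)) \<le> 16 ^ 4" by (simp add: power_Suc[symmetric] mult.assoc[symmetric] eval_nat_numeral)
    then show ?thesis using s0 by (simp add: field_simps)
  qed
  show ?thesis using a b by simp
qed

definition FD2 :: "nat \<Rightarrow> real" where
  "FD2 n = exp 2 * 32 ^ 8 / real n ^ 3 + exp 3 * real n ^ 5 * exp (- (real n powr (1/3)) / 2)"

definition FD1 :: "nat \<Rightarrow> real \<Rightarrow> real" where
  "FD1 n s = exp 1 * min (s ^ 3) (16 ^ 4 / s) + exp 3 * real n ^ 3 * exp (- (real n powr (1/3)) / 2)"

lemma dense_small_p:
  assumes n: "j \<le> n" "j \<le> 5" "0 < n" and p: "real n powr (-1/3) < p" "p < 1/2"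
  shows "(1 - p ^ 2 * (1 - p)) ^ (n - j) \<le> exp 3 * exp (- (real n powr (1/3)) / 2)"
proof -
  have n0: "0 < real n" using n by simp
  have p0: "0 < p" using p(1) powr_ge_zero[of "real n" "-1/3"] by linarith
  have pp1: "p ^ 2 \<le> 1" using p p0 by (intro power_le_one) auto
  have x0: "0 \<le> p ^ 2 * (1 - p)" "p ^ 2 * (1 - p) \<le> 1" using p p0 pp1
    by (auto intro!: mult_le_one)
  have "(1 - p ^ 2 * (1 - p)) ^ (n - j) \<le> exp (- (p ^ 2 * (1 - p)) * real (n - j))"
    by (rule one_minus_pow_exp[OF x0])
  also have "\<dots> \<le> exp (- (real n powr (-2/3) / 2 * (real n - 5)))"
  proof -
    have "(real n powr (-1/3)) ^ 2 \<le> p ^ 2" using p by (intro power_mono) auto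
    moreover have "(real n powr (-1/3)) ^ 2 = real n powr (-2/3)"
      by (simp add: power2_eq_square powr_add[symmetric])
    ultimately have a: "real n powr (-2/3) / 2 \<le> p ^ 2 * (1 - p)"
    proof -
      assume "(real n powr (-1/3)) ^ 2 \<le> p ^ 2" "(real n powr (-1/3)) ^ 2 = real n powr (-2/3)"
      then have "real n powr (-2/3) \<le> p ^ 2" by simp
      moreover have "p ^ 2 / 2 \<le> p ^ 2 * (1 - p)" using p p0 by (simp add: field_simps)
      ultimately show ?thesis by linarith
    qed
    have b: "real n - 5 \<le> real (n - j)" using n by (simp add: of_nat_diff)
    have "real n powr (-2/3) / 2 * (real n - 5) \<le> p ^ 2 * (1 - p) * real (n - j)"
    proof (cases "real n - 5 \<le> 0")
      case True
      then have "real n powr (-2/3) / 2 * (real n - 5) \<le> 0" by (simp add: mult_nonneg_nonpos)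
      also have "0 \<le> p ^ 2 * (1 - p) * real (n - j)" using x0 by simp
      finally show ?thesis .
    next
      case False
      then show ?thesis using a b x0 by (intro mult_mono) auto
    qed
    then show ?thesis by simp
  qed
  also have "\<dots> \<le> exp (5 / 2 - (real n powr (1/3)) / 2)"
  proof -
    have "real n powr (-2/3) * real n = real n powr (1/3)"
      using n0 powr_add[of "real n" "-2/3" 1] by simp
    moreover have "real n powr (-2/3) \<le> 1" using powr_mono[of "-2/3" 0 "real n"] n by simp
    ultimately have "real n powr (-2/3) / 2 * (real n - 5) \<ge> (real n powr (1/3)) / 2 - 5 / 2"
      by (simp add: algebra_simps)
    then show ?thesis by simp
  qed
  also have "\<dots> \<le> exp 3 * exp (- (real n powr (1/3)) / 2)"
    by (simp add: exp_add[symmetric])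
  finally show ?thesis .
qed


lemma dense_big_p:
  assumes n: "j \<le> n" and p: "1/2 \<le> p" "p \<le> 1"
  shows "(1 - p ^ 2 * (1 - p)) ^ (n - j) \<le> exp (real j / 4) * exp (- (real n * (1 - p)) / 4)"
proof -
  have x0: "0 \<le> p ^ 2 * (1 - p)" "p ^ 2 * (1 - p) \<le> 1" using p
    by (auto intro!: mult_le_one power_le_one)
  have "(1 - p ^ 2 * (1 - p)) ^ (n - j) \<le> exp (- (p ^ 2 * (1 - p)) * real (n - j))"
    by (rule one_minus_pow_exp[OF x0])
  also have "\<dots> \<le> exp (- ((1 - p) / 4 * real (n - j)))"
  proof -
    have "(1/2)^2 \<le> p ^ 2" using p by (intro power_mono) auto
    then have a: "1/4 \<le> p ^ 2" by (simp add: power2_eq_square)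
    have "1/4 * (1 - p) \<le> p ^ 2 * (1 - p)" using a p by (intro mult_right_mono) auto
    then have "(1 - p) / 4 \<le> p ^ 2 * (1 - p)" by simp
    then have "(1 - p) / 4 * real (n - j) \<le> p ^ 2 * (1 - p) * real (n - j)" by (intro mult_right_mono) auto
    then show ?thesis by simp
  qed
  also have "\<dots> = exp (real j * (1 - p) / 4) * exp (- (real n * (1 - p)) / 4)"
    using n by (simp add: exp_add[symmetric] of_nat_diff algebra_simps diff_divide_distrib)
  also have "\<dots> \<le> exp (real j / 4) * exp (- (real n * (1 - p)) / 4)"
  proof -
    have "real j * (1 - p) \<le> real j * 1" using p by (intro mult_left_mono) auto
    then show ?thesis by simp
  qed
  finally show ?thesis .
qed

lemma dense2_final:
  assumes n: "6 \<le> n" and p: "0 \<le> p" "p \<le> 1" "real n powr (-1/3) < p"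
  shows "gnp_prob n p (\<lambda>E. \<exists>a. star_cut_vertex n E a \<and> \<not> at_most_one_big_component E ({0..<n} - star E a)) \<le> FD2 n"
proof -
  have n0: "0 < real n" using n by simp
  have T1: "0 \<le> exp 2 * 32 ^ 8 / real n ^ 3" by simp
  have T2: "0 \<le> exp 3 * real n ^ 5 * exp (- (real n powr (1/3)) / 2)" by simp
  have q: "0 \<le> 1 - p" "1 - p \<le> 1" using p by auto
  have bb: "0 \<le> (1 - p ^ 2 * (1 - p)) ^ (n - 5)"
  proof -
    have "p ^ 2 * (1 - p) \<le> 1" using p by (auto intro!: mult_le_one power_le_one)
    then show ?thesis by simp
  qed
  have "gnp_prob n p (\<lambda>E. \<exists>a. star_cut_vertex n E a \<and> \<not> at_most_one_big_component E ({0..<n} - star E a))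
     \<le> real n ^ 5 * (p ^ 2 * (1 - p) ^ 8 * (1 - p ^ 2 * (1 - p)) ^ (n - 5))"
    by (rule union_dense2[OF p(1,2)])
  also have "\<dots> \<le> FD2 n"
  proof (cases "1/2 \<le> p")
    case True
    define s where "s = real n * (1 - p)"
    have s0: "0 \<le> s" unfolding s_def using q by simp
    have "real n ^ 5 * (p ^ 2 * (1 - p) ^ 8 * (1 - p ^ 2 * (1 - p)) ^ (n - 5))
        \<le> real n ^ 5 * (1 * (1 - p) ^ 8 * (exp (real 5 / 4) * exp (- s / 4)))"
      using dense_big_p[of 5 n p] True p n q bb unfolding s_def
      by (intro mult_left_mono mult_mono) (auto intro!: power_le_one)
    also have "\<dots> = exp (5 / 4) * (s ^ 8 * exp (- s / 4)) / real n ^ 3"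
      unfolding s_def using n0 by (simp add: power_mult_distrib field_simps eval_nat_numeral)
    also have "\<dots> \<le> exp 2 * 32 ^ 8 / real n ^ 3"
    proof -
      have "exp (5 / 4) * (s ^ 8 * exp (- s / 4)) \<le> exp 2 * 32 ^ 8"
        using pow8_exp[OF s0] by (intro mult_mono) auto
      then show ?thesis using n0 by (intro divide_right_mono) auto
    qed
    finally show ?thesis unfolding FD2_def using T2 by linarith
  next
    case False
    have "real n ^ 5 * (p ^ 2 * (1 - p) ^ 8 * (1 - p ^ 2 * (1 - p)) ^ (n - 5))
        \<le> real n ^ 5 * (1 * 1 * (exp 3 * exp (- (real n powr (1/3)) / 2)))"
    proof (intro mult_left_mono mult_mono)
      show "(1 - p ^ 2 * (1 - p)) ^ (n - 5) \<le> exp 3 * exp (- (real n powr (1/3)) / 2)"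
        using dense_small_p[of 5 n p] n p False by simp
    qed (use p q bb in \<open>auto intro!: power_le_one mult_le_one\<close>)
    then have "real n ^ 5 * (p ^ 2 * (1 - p) ^ 8 * (1 - p ^ 2 * (1 - p)) ^ (n - 5))
        \<le> exp 3 * real n ^ 5 * exp (- (real n powr (1/3)) / 2)" by (simp add: algebra_simps)
    then show ?thesis unfolding FD2_def using T1 by linarith
  qed
  finally show ?thesis .
qed

lemma dense1_final:
  assumes n: "6 \<le> n" and p: "0 \<le> p" "p \<le> 1" "real n powr (-1/3) < p"
  shows "gnp_prob n p (\<lambda>E. \<exists>a. star_cut_vertex n E a) \<le> FD1 n (real n * (1 - p))"
proof -
  have n0: "0 < real n" using n by simp
  define s where "s = real n * (1 - p)"
  have T1: "0 \<le> exp 1 * min (s ^ 3) (16 ^ 4 / s)" unfolding s_def using p by simp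
  have T2: "0 \<le> exp 3 * real n ^ 3 * exp (- (real n powr (1/3)) / 2)" by simp
  have q: "0 \<le> 1 - p" "1 - p \<le> 1" using p by auto
  have bb: "0 \<le> (1 - p ^ 2 * (1 - p)) ^ (n - 3)"
  proof -
    have "p ^ 2 * (1 - p) \<le> 1" using p by (auto intro!: mult_le_one power_le_one)
    then show ?thesis by simp
  qed
  have "gnp_prob n p (\<lambda>E. \<exists>a. star_cut_vertex n E a)
     \<le> real n ^ 3 * ((1 - p) ^ 3 * (1 - p ^ 2 * (1 - p)) ^ (n - 3))"
    by (rule union_dense1[OF p(1,2)])
  also have "\<dots> \<le> FD1 n s"
  proof (cases "1/2 \<le> p")
    case True
    have s0: "0 \<le> s" unfolding s_def using q by simp
    have "real n ^ 3 * ((1 - p) ^ 3 * (1 - p ^ 2 * (1 - p)) ^ (n - 3))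
        \<le> real n ^ 3 * ((1 - p) ^ 3 * (exp (real 3 / 4) * exp (- s / 4)))"
      using dense_big_p[of 3 n p] True p n q bb unfolding s_def
      by (intro mult_left_mono mult_mono) auto
    also have "\<dots> = exp (3 / 4) * (s ^ 3 * exp (- s / 4))"
      unfolding s_def power_mult_distrib by (simp add: algebra_simps)
    also have "\<dots> \<le> exp 1 * min (s ^ 3) (16 ^ 4 / s)"
    proof (rule mult_mono)
      show "0 \<le> s ^ 3 * exp (- s / 4)" using s0 by simp
    qed (use pow3_exp[OF s0] in auto)
    finally show ?thesis unfolding FD1_def using T2 by linarith
  next
    case False
    have "real n ^ 3 * ((1 - p) ^ 3 * (1 - p ^ 2 * (1 - p)) ^ (n - 3))
        \<le> real n ^ 3 * (1 * (exp 3 * exp (- (real n powr (1/3)) / 2)))"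
    proof (intro mult_left_mono mult_mono)
      show "(1 - p ^ 2 * (1 - p)) ^ (n - 3) \<le> exp 3 * exp (- (real n powr (1/3)) / 2)"
        using dense_small_p[of 3 n p] n p False by simp
    qed (use p q bb in \<open>auto intro!: power_le_one\<close>)
    also have "\<dots> \<le> exp 1 * min (s ^ 3) (16 ^ 4 / s) + exp 3 * real n ^ 3 * exp (- (real n powr (1/3)) / 2)"
      using T1 by (simp add: algebra_simps)
    finally show ?thesis unfolding FD1_def by simp
  qed
  finally show ?thesis unfolding s_def .
qed


lemma lim1: "(\<lambda>n::nat. exp 2 * ln (real n) ^ 4 * exp (- ln (real n) / 2)
     + 4 * exp 6 / ln (real n) + 8 * exp 9 / ln (real n)
     + real n ^ 3 / ln (real n) * (exp 3 * ln (real n) * exp (- ln (real n) / 12)) ^ 60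
     + real n ^ 2 * (21 / 25) powr ((real n - 1) / 2)) \<longlonglongrightarrow> 0"
  by real_asymp

lemma lim2: "(\<lambda>n::nat. exp 2 * 32 ^ 8 / real n ^ 3 + exp 3 * real n ^ 5 * exp (- (real n powr (1/3)) / 2)) \<longlonglongrightarrow> 0"
  by real_asymp

lemma lim3: "(\<lambda>n::nat. exp 3 * real n ^ 3 * exp (- (real n powr (1/3)) / 2)) \<longlonglongrightarrow> 0"
  by real_asymp

lemma ev1: "\<forall>\<^sub>F n in sequentially. 100 \<le> n \<and> 100 \<le> ln (real n) \<and> ln (ln (real n)) \<le> ln (real n) / 2
   \<and> real n powr (-1/3) \<le> 1/100 \<and> dlt n \<le> 1/2 \<and> 2 * ln (real n) * dlt n \<le> 1
   \<and> 60 \<le> real n powr (1/6) \<and> exp 3 * ln (real n) * exp (- ln (real n) / 12) \<le> 1"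
  unfolding dlt_def
  by (intro eventually_conj eventually_ge_at_top) real_asymp+

lemma gnp_not:
  assumes "0 \<le> p" "p \<le> 1"
  shows "gnp_prob n p (\<lambda>E. \<not> P E) = 1 - gnp_prob n p P"
  unfolding gnp_mu using mu_not[OF assms fin_ap[OF assms]] by simp

lemma FS_nonneg: "1 < n \<Longrightarrow> 0 \<le> FS n w"
  unfolding FS_def by (intro add_nonneg_nonneg) auto

lemma FD1_nonneg: "0 \<le> s \<Longrightarrow> 0 \<le> FD1 n s"
  unfolding FD1_def by (intro add_nonneg_nonneg) auto

lemma FD2_nonneg: "0 \<le> FD2 n"
  unfolding FD2_def by (intro add_nonneg_nonneg) auto

theorem theorem1p5:
  fixes p :: "nat \<Rightarrow> real"
  assumes prob: "\<And>n. 0 \<le> p n \<and> p n \<le> 1"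
    and hyp_i: "\<exists>\<omega> :: nat \<Rightarrow> real. filterlim \<omega> at_top sequentially \<and>
        (\<forall>\<^sub>F n in sequentially. p n > (ln (real n) + ln (ln (real n)) + \<omega> n) / real n)"
  shows "((((\<lambda>n. real n * (1 - p n)) \<longlonglongrightarrow> 0)
            \<or> filterlim (\<lambda>n. real n * (1 - p n)) at_top sequentially)
          \<longrightarrow> ((\<lambda>n. gnp_prob n (p n) (\<lambda>E. \<not> (\<exists>a. star_cut_vertex n E a))) \<longlonglongrightarrow> 1))
        \<and> ((\<lambda>n. gnp_prob n (p n)
            (\<lambda>E. \<forall>a. star_cut_vertex n E a \<longrightarrow>
                  at_most_one_big_component E ({0..<n} - star E a))) \<longlonglongrightarrow> 1)"
proof -
  obtain \<omega> :: "nat \<Rightarrow> real" where om: "filterlim \<omega> at_top sequentially"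
    "\<forall>\<^sub>F n in sequentially. p n > (ln (real n) + ln (ln (real n)) + \<omega> n) / real n"
    using hyp_i by blast
  define w where "w = (\<lambda>n. min (\<omega> n) (ln (ln (real n))))"
  have lnln: "filterlim (\<lambda>n::nat. ln (ln (real n))) at_top sequentially" by real_asymp
  have wlim: "filterlim w at_top sequentially"
    unfolding filterlim_at_top
  proof
    fix Z :: real
    have "\<forall>\<^sub>F n in sequentially. Z \<le> \<omega> n" using om(1) unfolding filterlim_at_top by blast
    moreover have "\<forall>\<^sub>F n in sequentially. Z \<le> ln (ln (real n))" using lnln unfolding filterlim_at_top by blast
    ultimately show "\<forall>\<^sub>F n in sequentially. Z \<le> w n" unfolding w_def by eventually_elim simp
  qed
  have ew: "\<forall>\<^sub>F n in sequentially. 0 \<le> w n" using wlim unfolding filterlim_at_top by blast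
  define s where "s = (\<lambda>n. real n * (1 - p n))"
  define bad1 where "bad1 = (\<lambda>n. gnp_prob n (p n) (\<lambda>E. \<exists>a. star_cut_vertex n E a))"
  define bad2 where "bad2 = (\<lambda>n. gnp_prob n (p n) (\<lambda>E. \<exists>a. star_cut_vertex n E a \<and> \<not> at_most_one_big_component E ({0..<n} - star E a)))"
  have b1_0: "0 \<le> bad1 n" for n unfolding bad1_def gnp_mu using mu_nonneg prob by blast
  have b2_0: "0 \<le> bad2 n" for n unfolding bad2_def gnp_mu using mu_nonneg prob by blast
  have b21: "bad2 n \<le> bad1 n" for n
    unfolding bad1_def bad2_def gnp_mu using prob by (intro mu_mono) auto
  have s0: "0 \<le> s n" for n unfolding s_def using prob[of n] by simp
  have EV: "\<forall>\<^sub>F n in sequentially. (p n \<le> real n powr (-1/3) \<longrightarrow> bad1 n \<le> FS n (w n))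
      \<and> (real n powr (-1/3) < p n \<longrightarrow> bad1 n \<le> FD1 n (s n) \<and> bad2 n \<le> FD2 n)"
    using ev1 om(2) ew
  proof eventually_elim
    case (elim n)
    have pn: "0 \<le> p n" "p n \<le> 1" using prob[of n] by auto
    have pw: "(ln (real n) + ln (ln (real n)) + w n) / real n \<le> p n"
    proof -
      have "(ln (real n) + ln (ln (real n)) + w n) / real n \<le> (ln (real n) + ln (ln (real n)) + \<omega> n) / real n"
        unfolding w_def using elim by (intro divide_right_mono) auto
      then show ?thesis using elim by linarith
    qed
    show ?case
    proof (intro conjI impI)
      assume "p n \<le> real n powr (-1/3)"
      then show "bad1 n \<le> FS n (w n)" unfolding bad1_def
        by (intro sparse_final) (use elim pw in \<open>auto simp: w_def\<close>)
    next
      assume "real n powr (-1/3) < p n"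
      then show "bad1 n \<le> FD1 n (s n)" unfolding bad1_def s_def
        using dense1_final[of n "p n"] elim pn by auto
    next
      assume "real n powr (-1/3) < p n"
      then show "bad2 n \<le> FD2 n" unfolding bad2_def
        using dense2_final[of n "p n"] elim pn by auto
    qed
  qed
  have FSlim: "(\<lambda>n. FS n (w n)) \<longlonglongrightarrow> 0"
  proof -
    have e: "(\<lambda>n. exp (- w n)) \<longlonglongrightarrow> 0"
    proof -
      have "filterlim (\<lambda>n. - w n) at_bot sequentially" using wlim by (simp add: filterlim_uminus_at_top)
      then show ?thesis by (rule filterlim_compose[OF exp_at_bot])
    qed
    have "(\<lambda>n. 4 * exp 2 * exp (- w n) + (exp 2 * ln (real n) ^ 4 * exp (- ln (real n) / 2)
     + 4 * exp 6 / ln (real n) + 8 * exp 9 / ln (real n)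
     + real n ^ 3 / ln (real n) * (exp 3 * ln (real n) * exp (- ln (real n) / 12)) ^ 60
     + real n ^ 2 * (21 / 25) powr ((real n - 1) / 2))) \<longlonglongrightarrow> 4 * exp 2 * 0 + 0"
      by (intro tendsto_add tendsto_mult_left e lim1)
    then show ?thesis unfolding FS_def by (simp add: add.assoc)
  qed
  have part2: "bad2 \<longlonglongrightarrow> 0"
  proof (rule tendsto_sandwich[of "\<lambda>_. 0" _ _ "\<lambda>n. FS n (w n) + FD2 n"])
    show "\<forall>\<^sub>F n in sequentially. 0 \<le> bad2 n" using b2_0 by simp
    show "\<forall>\<^sub>F n in sequentially. bad2 n \<le> FS n (w n) + FD2 n"
      using EV eventually_ge_at_top[of 2]
    proof eventually_elim
      case (elim n)
      show ?case
      proof (cases "p n \<le> real n powr (-1/3)")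
        case True
        then show ?thesis using elim b21[of n] FD2_nonneg[of n] by linarith
      next
        case False
        then show ?thesis using elim FS_nonneg[of n "w n"] by auto
      qed
    qed
    have "(\<lambda>n. FD2 n) \<longlonglongrightarrow> 0" unfolding FD2_def by (rule lim2)
    then show "(\<lambda>n. FS n (w n) + FD2 n) \<longlonglongrightarrow> 0" using FSlim tendsto_add[of _ 0 _ _ 0] by auto
  qed simp
  have part1: "bad1 \<longlonglongrightarrow> 0" if ii: "(s \<longlonglongrightarrow> 0) \<or> filterlim s at_top sequentially"
  proof (rule tendsto_sandwich[of "\<lambda>_. 0" _ _ "\<lambda>n. FS n (w n) + FD1 n (s n)"])
    show "\<forall>\<^sub>F n in sequentially. 0 \<le> bad1 n" using b1_0 by simp
    show "\<forall>\<^sub>F n in sequentially. bad1 n \<le> FS n (w n) + FD1 n (s n)"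
      using EV eventually_ge_at_top[of 2]
    proof eventually_elim
      case (elim n)
      show ?case
      proof (cases "p n \<le> real n powr (-1/3)")
        case True
        then show ?thesis using elim FD1_nonneg[OF s0[of n], of n] by linarith
      next
        case False
        then show ?thesis using elim FS_nonneg[of n "w n"] by auto
      qed
    qed
    have m: "(\<lambda>n. min (s n ^ 3) (16 ^ 4 / s n)) \<longlonglongrightarrow> 0"
      using ii
    proof
      assume a: "s \<longlonglongrightarrow> 0"
      have "(\<lambda>n. s n ^ 3) \<longlonglongrightarrow> 0 ^ 3" by (intro tendsto_power a)
      then have c: "(\<lambda>n. s n ^ 3) \<longlonglongrightarrow> 0" by simp
      show ?thesis
      proof (rule tendsto_sandwich[of "\<lambda>_. 0" _ _ "\<lambda>n. s n ^ 3"])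
        show "\<forall>\<^sub>F n in sequentially. 0 \<le> min (s n ^ 3) (16 ^ 4 / s n)" using s0 by simp
        show "\<forall>\<^sub>F n in sequentially. min (s n ^ 3) (16 ^ 4 / s n) \<le> s n ^ 3" by simp
      qed (use c in simp)+
    next
      assume a: "filterlim s at_top sequentially"
      have "(\<lambda>n. inverse (s n)) \<longlonglongrightarrow> 0" by (rule tendsto_inverse_0_at_top[OF a])
      then have "(\<lambda>n. 16 ^ 4 * inverse (s n)) \<longlonglongrightarrow> 16 ^ 4 * 0" by (intro tendsto_mult_left)
      then have c: "(\<lambda>n. 16 ^ 4 / s n) \<longlonglongrightarrow> 0" by (simp add: divide_inverse)
      show ?thesis
      proof (rule tendsto_sandwich[of "\<lambda>_. 0" _ _ "\<lambda>n. 16 ^ 4 / s n"])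
        show "\<forall>\<^sub>F n in sequentially. 0 \<le> min (s n ^ 3) (16 ^ 4 / s n)" using s0 by simp
        show "\<forall>\<^sub>F n in sequentially. min (s n ^ 3) (16 ^ 4 / s n) \<le> 16 ^ 4 / s n" by simp
      qed (use c in simp)+
    qed
    have "(\<lambda>n. exp 1 * min (s n ^ 3) (16 ^ 4 / s n) + exp 3 * real n ^ 3 * exp (- (real n powr (1/3)) / 2))
        \<longlonglongrightarrow> exp 1 * 0 + 0"
      by (intro tendsto_add tendsto_mult_left m lim3)
    then have "(\<lambda>n. FD1 n (s n)) \<longlonglongrightarrow> 0" unfolding FD1_def by simp
    then show "(\<lambda>n. FS n (w n) + FD1 n (s n)) \<longlonglongrightarrow> 0" using FSlim tendsto_add[of _ 0 _ _ 0] by auto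
  qed simp
  have g1: "gnp_prob n (p n) (\<lambda>E. \<not> (\<exists>a. star_cut_vertex n E a)) = 1 - bad1 n" for n
    unfolding bad1_def using gnp_not[of "p n" n "\<lambda>E. \<exists>a. star_cut_vertex n E a"] prob[of n] by simp
  have g2: "gnp_prob n (p n) (\<lambda>E. \<forall>a. star_cut_vertex n E a \<longrightarrow>
                  at_most_one_big_component E ({0..<n} - star E a)) = 1 - bad2 n" for n
  proof -
    have "gnp_prob n (p n) (\<lambda>E. \<forall>a. star_cut_vertex n E a \<longrightarrow> at_most_one_big_component E ({0..<n} - star E a))
        = gnp_prob n (p n) (\<lambda>E. \<not> (\<exists>a. star_cut_vertex n E a \<and> \<not> at_most_one_big_component E ({0..<n} - star E a)))"
      by simp
    also have "\<dots> = 1 - bad2 n" unfolding bad2_def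
      using gnp_not[of "p n" n "\<lambda>E. \<exists>a. star_cut_vertex n E a \<and> \<not> at_most_one_big_component E ({0..<n} - star E a)"] prob[of n]
      by simp
    finally show ?thesis .
  qed
  show ?thesis
  proof (intro conjI impI)
    assume ii: "((\<lambda>n. real n * (1 - p n)) \<longlonglongrightarrow> 0) \<or> filterlim (\<lambda>n. real n * (1 - p n)) at_top sequentially"
    have "(\<lambda>n. 1 - bad1 n) \<longlonglongrightarrow> 1 - 0" by (intro tendsto_diff tendsto_const part1) (use ii in \<open>simp add: s_def\<close>)
    then show "(\<lambda>n. gnp_prob n (p n) (\<lambda>E. \<not> (\<exists>a. star_cut_vertex n E a))) \<longlonglongrightarrow> 1" unfolding g1 by simp
  next
    have "(\<lambda>n. 1 - bad2 n) \<longlonglongrightarrow> 1 - 0" by (intro tendsto_diff tendsto_const part2)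
    then show "(\<lambda>n. gnp_prob n (p n) (\<lambda>E. \<forall>a. star_cut_vertex n E a \<longrightarrow>
                  at_most_one_big_component E ({0..<n} - star E a))) \<longlonglongrightarrow> 1" unfolding g2 by simp
  qed
qed


end
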